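(* Let $\varepsilon,\delta\ge0$, let $M,N$ be positive integers, and let $\Lambda>0$. Let $P(z)$ be a nonzero polynomial of degree $M$ and $Q(z)$ a monic polynomial of degree $N$ with complex coefficients, and let $S$ be the multiset of the $N$ roots of $Q$. Assume (1) $S\subseteq B_{\Lambda/2}$, and (2) $\nu\varepsilon+2-(N-k)\delta\neq0$ for all integers $0\le k\le N$, $0\le\nu\le M$. For each $\nu\ge0$ define $k_\nu=-1$ if $\nu\varepsilon+2>N\delta$, and otherwise let $k_\nu$ be the integer with $0\le k_\nu\le N-1$ and $(N-k_\nu-1)\delta<\nu\varepsilon+2<(N-k_\nu)\delta$. For a root $\alpha$ of $Q$ define $$\Phi_{\nu,k}(\alpha)=\begin{cases}L_k(\alpha)^{(N-k)\delta-(\nu\varepsilon+2)}\prod_{0\le i<k}L_i(\alpha)^{\delta}, & k\ge0,\\ \Lambda^{N\delta-(\nu\varepsilon+2)}, & k<0.\end{cases}$$ Then $$\int_{B_\Lambda}\frac{|P(z)|^\varepsilon}{|Q(z)|^\delta}\,dV\ \sim\ \sum_{\{\alpha:Q(\alpha)=0\}}\ \sum_{\{\nu:P^{(\nu)}(\alpha)\ne0\}}\frac{|P^{(\nu)}(\alpha)|^\varepsilon}{\Phi_{\nu,k_\nu}(\alpha)},$$ where $\sim$ means each side is bounded by a positive constant multiple of the other (with the convention $1/0=\infty$, so one side is infinite iff the other is), with constants depending only on $\varepsilon,\delta,M,N$ and not on $P,Q,\Lambda$.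
   Context: $dV=dx\,dy$ is Lebesgue measure on $\mathbb{C}$, and $B_r$ is the open disk of radius $r$ centered at $0$. For a set $A\subseteq\mathbb{C}$, $d(A)=\sup_{\alpha,\beta\in A}|\alpha-\beta|$. Local cluster scales: for a root $\alpha\in S$ and $0\le k\le N-1$, $L_k(\alpha)=\inf d(S_{N-k}(\alpha))$, the infimum over all sub-multisets $S_{N-k}(\alpha)\subseteq S$ with $N-k$ elements containing $\alpha$. One has $L_0(\alpha)\ge L_1(\alpha)\ge\dots\ge L_{N-1}(\alpha)=0$. $P^{(\nu)}$ is the $\nu$-th derivative of $P$. *)

theory Defs
  imports "HOL-Analysis.Analysis" "HOL-Computational_Algebra.Polynomial"
begin

definition cluster_scale :: "complex multiset \<Rightarrow> nat \<Rightarrow> complex \<Rightarrow> real" where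
  "cluster_scale S k \<alpha> =
     Inf {diameter (set_mset T) | T. T \<subseteq># S \<and> size T = size S - k \<and> \<alpha> \<in># T}"

definition k_index :: "real \<Rightarrow> real \<Rightarrow> nat \<Rightarrow> nat \<Rightarrow> int" where
  "k_index \<epsilon> \<delta> N \<nu> =
     (if real \<nu> * \<epsilon> + 2 > real N * \<delta> then -1
      else (THE k::int. 0 \<le> k \<and> k \<le> int N - 1 \<and>
              (real_of_int (int N - k - 1)) * \<delta> < real \<nu> * \<epsilon> + 2 \<and>
              real \<nu> * \<epsilon> + 2 < (real_of_int (int N - k)) * \<delta>))"

definition Phi :: "real \<Rightarrow> real \<Rightarrow> real \<Rightarrow> complex multiset \<Rightarrow> nat \<Rightarrow> int \<Rightarrow> complex \<Rightarrow> real" where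
  "Phi \<epsilon> \<delta> \<Lambda> S \<nu> k \<alpha> =
     (if k \<ge> 0 then
        cluster_scale S (nat k) \<alpha> powr
          (real_of_int (int (size S) - k) * \<delta> - (real \<nu> * \<epsilon> + 2))
        * (\<Prod>i<nat k. cluster_scale S i \<alpha> powr \<delta>)
      else \<Lambda> powr (real (size S) * \<delta> - (real \<nu> * \<epsilon> + 2)))"

end

theory Submission
  imports Defs "HOL-Complex_Analysis.Complex_Analysis" "HOL-Computational_Algebra.Fundamental_Theorem_Algebra"
begin

lemma prod_mset_image_nonneg:
  fixes f :: "'a \<Rightarrow> 'b::linordered_semidom"
  shows "(\<And>x. x \<in># A \<Longrightarrow> 0 \<le> f x) \<Longrightarrow> 0 \<le> (\<Prod>x\<in>#A. f x)"
  by (induction A) auto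

lemma prod_mset_image_mono:
  fixes f g :: "'a \<Rightarrow> 'b::linordered_semidom"
  shows "(\<And>x. x \<in># A \<Longrightarrow> 0 \<le> f x \<and> f x \<le> g x) \<Longrightarrow> (\<Prod>x\<in>#A. f x) \<le> (\<Prod>x\<in>#A. g x)"
proof (induction A)
  case (add x A)
  have "f x * (\<Prod>x\<in>#A. f x) \<le> g x * (\<Prod>x\<in>#A. g x)"
    by (rule mult_mono) (use add prod_mset_image_nonneg[of A f] in \<open>auto intro: order_trans\<close>)
  then show ?case by simp
qed simp

lemma norm_prod_mset_image:
  fixes f :: "'a \<Rightarrow> 'b::{real_normed_field}"
  shows "norm (\<Prod>x\<in>#A. f x) = (\<Prod>x\<in>#A. norm (f x))"
  by (induction A) (auto simp: norm_mult)

lemma prod_mset_image_cmult: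
  fixes f :: "'a \<Rightarrow> 'b::comm_monoid_mult"
  shows "(\<Prod>x\<in>#A. c * f x) = c ^ size A * (\<Prod>x\<in>#A. f x)"
  by (induction A) (auto simp: ac_simps)

lemma cmod_poly_proots:
  fixes p :: "complex poly"
  shows "cmod (poly p z) = cmod (lead_coeff p) * (\<Prod>w\<in>#proots p. cmod (z - w))"
proof -
  have "poly p z = poly (smult (lead_coeff p) (\<Prod>x\<in>#proots p. [:-x, 1:])) z"
    by (simp add: complex_poly_decompose_multiset)
  also have "\<dots> = lead_coeff p * (\<Prod>w\<in>#proots p. (z - w))"
    by (simp add: poly_prod_mset image_mset.compositionality o_def)
  finally show ?thesis by (simp add: norm_mult norm_prod_mset_image image_mset.compositionality o_def)
qed

lemma higher_deriv_poly: "(deriv ^^ n) (poly p) = poly ((pderiv ^^ n) p)"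
proof (induction n)
  case (Suc n)
  show ?case
    by (simp add: Suc fun_eq_iff DERIV_imp_deriv poly_DERIV)
qed simp

lemma higher_pderiv_pcompose_lin:
  "(pderiv ^^ n) (pcompose p [:a, 1:]) = pcompose ((pderiv ^^ n) p) [:a, 1:]"
  by (induction n) (simp_all add: pderiv_pcompose pderiv_pCons)

lemma taylor_coeff:
  fixes p :: "complex poly"
  shows "coeff (pcompose p [:a, 1:]) i = poly ((pderiv ^^ i) p) a / fact i"
proof -
  have "coeff ((pderiv ^^ i) (pcompose p [:a, 1:])) 0 = pochhammer 1 i * coeff (pcompose p [:a, 1:]) i"
    using coeff_higher_pderiv[of i "pcompose p [:a, 1:]" 0] by simp
  moreover have "coeff ((pderiv ^^ i) (pcompose p [:a, 1:])) 0 = poly ((pderiv ^^ i) p) a"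
    by (simp add: higher_pderiv_pcompose_lin poly_0_coeff_0[symmetric] poly_pcompose)
  ultimately show ?thesis by (simp add: pochhammer_fact[symmetric])
qed

lemma taylor_bound:
  fixes p :: "complex poly"
  shows "cmod (poly p z) \<le> (\<Sum>i\<le>degree p. cmod (poly ((pderiv ^^ i) p) a) / fact i * cmod (z - a) ^ i)"
proof -
  have "poly p z = poly (pcompose p [:a, 1:]) (z - a)" by (simp add: poly_pcompose)
  also have "\<dots> = (\<Sum>i\<le>degree p. coeff (pcompose p [:a, 1:]) i * (z - a) ^ i)"
    by (simp add: poly_altdef degree_pcompose)
  finally have "cmod (poly p z) \<le> (\<Sum>i\<le>degree p. cmod (coeff (pcompose p [:a, 1:]) i * (z - a) ^ i))"
    by (metis norm_sum)
  also have "\<dots> = (\<Sum>i\<le>degree p. cmod (poly ((pderiv ^^ i) p) a) / fact i * cmod (z - a) ^ i)"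
    by (simp add: taylor_coeff norm_mult norm_divide norm_power)
  finally show ?thesis .
qed

lemma cauchy_poly_bound:
  fixes p :: "complex poly"
  assumes "s > 0" "p \<noteq> 0"
  shows "cmod (poly ((pderiv ^^ n) p) a) / fact n * s ^ n
          \<le> cmod (lead_coeff p) * (\<Prod>w\<in>#proots p. s + cmod (a - w))"
proof -
  have "cmod ((deriv ^^ n) (poly p) a) \<le> fact n * (cmod (lead_coeff p) * (\<Prod>w\<in>#proots p. s + cmod (a - w))) / s ^ n"
  proof (rule Cauchy_inequality)
    show "poly p holomorphic_on ball a s" using poly_holomorphic_on[of "\<lambda>z. z" "ball a s" p] by (simp add: holomorphic_intros)
    show "continuous_on (cball a s) (poly p)" by (simp add: continuous_on_poly)
    show "0 < s" by fact
    fix x assume x: "cmod (a - x) = s"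
    have "cmod (poly p x) = cmod (lead_coeff p) * (\<Prod>w\<in>#proots p. cmod (x - w))"
      by (rule cmod_poly_proots)
    also have "\<dots> \<le> cmod (lead_coeff p) * (\<Prod>w\<in>#proots p. s + cmod (a - w))"
    proof (rule mult_left_mono)
      show "(\<Prod>w\<in>#proots p. cmod (x - w)) \<le> (\<Prod>w\<in>#proots p. s + cmod (a - w))"
      proof (rule prod_mset_image_mono)
        fix w assume "w \<in># proots p"
        have "cmod (x - w) \<le> cmod (x - a) + cmod (a - w)" using norm_triangle_ineq[of "x-a" "a-w"] by simp
        then show "0 \<le> cmod (x - w) \<and> cmod (x - w) \<le> s + cmod (a - w)" using x by (simp add: norm_minus_commute)
      qed
    qed simp
    finally show "cmod (poly p x) \<le> cmod (lead_coeff p) * (\<Prod>w\<in>#proots p. s + cmod (a - w))" .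
  qed
  then show ?thesis using assms by (simp add: higher_deriv_poly field_simps)
qed

definition gq :: "complex multiset \<Rightarrow> complex \<Rightarrow> real \<Rightarrow> real" where
  "gq S a s = (\<Prod>b\<in>#S. max s (cmod (a - b)))"

lemma gq_nonneg: "0 \<le> s \<Longrightarrow> 0 \<le> gq S a s"
  unfolding gq_def by (rule prod_mset_image_nonneg) auto

lemma gq_pos: "0 < s \<Longrightarrow> 0 < gq S a s"
  unfolding gq_def by (induction S) (auto intro!: mult_pos_pos simp: less_max_iff_disj)

lemma gq_mono: "0 \<le> s \<Longrightarrow> s \<le> s' \<Longrightarrow> gq S a s \<le> gq S a s'"
  unfolding gq_def by (rule prod_mset_image_mono) auto

lemma gq_double: "0 \<le> s \<Longrightarrow> gq S a (2 * s) \<le> 2 ^ size S * gq S a s"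
proof -
  assume s: "0 \<le> s"
  have "gq S a (2 * s) \<le> (\<Prod>b\<in>#S. 2 * max s (cmod (a - b)))"
    unfolding gq_def by (rule prod_mset_image_mono) (use s in auto)
  also have "\<dots> = 2 ^ size S * gq S a s" by (simp add: prod_mset_image_cmult gq_def)
  finally show ?thesis .
qed

lemma gq_ge_pow: "0 \<le> s \<Longrightarrow> s ^ size S \<le> gq S a s"
proof -
  assume s: "0 \<le> s"
  have "(\<Prod>b\<in>#S. s) \<le> gq S a s"
    unfolding gq_def by (rule prod_mset_image_mono) (use s in auto)
  then show ?thesis by simp
qed

lemma Q_upper_gq:
  "(\<Prod>b\<in>#S. cmod (z - b)) \<le> 2 ^ size S * gq S a (cmod (z - a))"
proof -
  have "(\<Prod>b\<in>#S. cmod (z - b)) \<le> (\<Prod>b\<in>#S. 2 * max (cmod (z - a)) (cmod (a - b)))"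
  proof (rule prod_mset_image_mono)
    fix b assume "b \<in># S"
    have "cmod (z - b) \<le> cmod (z - a) + cmod (a - b)"
      using norm_triangle_ineq[of "z-a" "a-b"] by simp
    then show "0 \<le> cmod (z - b) \<and> cmod (z - b) \<le> 2 * max (cmod (z - a)) (cmod (a - b))"
      by auto
  qed
  also have "\<dots> = 2 ^ size S * gq S a (cmod (z - a))" by (simp add: prod_mset_image_cmult gq_def)
  finally show ?thesis .
qed

lemma Q_lower_gq:
  assumes near: "\<And>b. b \<in># S \<Longrightarrow> cmod (z - a) \<le> cmod (z - b)"
  shows "gq S a (cmod (z - a)) \<le> 2 ^ size S * (\<Prod>b\<in>#S. cmod (z - b))"
proof -
  have "gq S a (cmod (z - a)) \<le> (\<Prod>b\<in>#S. 2 * cmod (z - b))"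
    unfolding gq_def
  proof (rule prod_mset_image_mono)
    fix b assume b: "b \<in># S"
    have h1: "cmod (a - b) \<le> cmod (z - a) + cmod (z - b)"
      using norm_triangle_ineq[of "a-z" "z-b"] norm_minus_commute[of a z] by simp
    have h2: "cmod (z - a) \<le> cmod (z - b)" using near[OF b] .
    have "max (cmod (z - a)) (cmod (a - b)) \<le> 2 * cmod (z - b)"
      using h1 h2 norm_ge_zero[of "z-b"] unfolding max_def by (smt (verit))
    then show "0 \<le> max (cmod (z - a)) (cmod (a - b)) \<and> max (cmod (z - a)) (cmod (a - b)) \<le> 2 * cmod (z - b)"
      by (simp add: le_max_iff_disj)
  qed
  also have "\<dots> = 2 ^ size S * (\<Prod>b\<in>#S. cmod (z - b))" by (simp add: prod_mset_image_cmult)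
  finally show ?thesis .
qed

definition dsl :: "complex multiset \<Rightarrow> complex \<Rightarrow> real list" where
  "dsl S a = sorted_list_of_multiset (image_mset (\<lambda>b. cmod (a - b)) S)"

definition td :: "complex multiset \<Rightarrow> complex \<Rightarrow> nat \<Rightarrow> real" where
  "td S a i = dsl S a ! (size S - 1 - i)"

lemma dsl_props: "sorted (dsl S a)" "length (dsl S a) = size S"
  "mset (dsl S a) = image_mset (\<lambda>b. cmod (a - b)) S"
    apply (simp add: dsl_def)
   apply (metis dsl_def mset_sorted_list_of_multiset size_mset size_image_mset)
  by (simp add: dsl_def)

lemma length_filter_take_drop:
  "length (filter P xs) = length (filter P (take j xs)) + length (filter P (drop j xs))"
proof -
  have "filter P xs = filter P (take j xs) @ filter P (drop j xs)"
    by (simp flip: filter_append)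
  then show ?thesis by (metis length_append)
qed

lemma sorted_count_less:
  fixes xs :: "real list"
  assumes "sorted xs" "j < length xs"
  shows "length (filter (\<lambda>d. d < xs ! j) xs) \<le> j"
proof -
  have "filter (\<lambda>d. d < xs ! j) (drop j xs) = []"
  proof -
    have "\<forall>d\<in>set (drop j xs). xs ! j \<le> d"
    proof
      fix d assume "d \<in> set (drop j xs)"
      then obtain k where k: "k < length (drop j xs)" "d = drop j xs ! k" by (metis in_set_conv_nth)
      then have "d = xs ! (j + k)" using assms by simp
      moreover have "j + k < length xs" using k by simp
      ultimately show "xs ! j \<le> d" using assms(1) by (simp add: sorted_nth_mono)
    qed
    then show ?thesis by (auto simp: filter_empty_conv)
  qed
  moreover have "length (filter (\<lambda>d. d < xs ! j) xs) = length (filter (\<lambda>d. d < xs ! j) (take j xs)) + length (filter (\<lambda>d. d < xs ! j) (drop j xs))"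
    by (rule length_filter_take_drop)
  ultimately have "length (filter (\<lambda>d. d < xs ! j) xs) = length (filter (\<lambda>d. d < xs ! j) (take j xs))"
    by simp
  also have "\<dots> \<le> length (take j xs)" by (rule length_filter_le)
  also have "\<dots> \<le> j" by simp
  finally show ?thesis .
qed

lemma sorted_count_le:
  fixes xs :: "real list"
  assumes "sorted xs" "j < length xs"
  shows "j + 1 \<le> length (filter (\<lambda>d. d \<le> xs ! j) xs)"
proof -
  have "filter (\<lambda>d. d \<le> xs ! j) (take (j+1) xs) = take (j+1) xs"
  proof (rule filter_True, rule ballI)
    fix d assume "d \<in> set (take (j+1) xs)"
    then obtain k where k: "k < length (take (j+1) xs)" "d = take (j+1) xs ! k" by (metis in_set_conv_nth)
    then have "d = xs ! k" "k \<le> j" by auto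
    then show "d \<le> xs ! j" using assms by (simp add: sorted_nth_mono)
  qed
  moreover have "length (filter (\<lambda>d. d \<le> xs ! j) xs) = length (filter (\<lambda>d. d \<le> xs ! j) (take (j+1) xs)) + length (filter (\<lambda>d. d \<le> xs ! j) (drop (j+1) xs))"
    by (rule length_filter_take_drop)
  ultimately have "length (filter (\<lambda>d. d \<le> xs ! j) xs) \<ge> length (take (j+1) xs)"
    by simp
  then show ?thesis using assms by simp
qed

lemma gq_td: "gq S a s = (\<Prod>i<size S. max s (td S a i))"
proof -
  have "gq S a s = prod_mset (image_mset (max s) (image_mset (\<lambda>b. cmod (a - b)) S))"
    by (simp add: gq_def image_mset.compositionality o_def)
  also have "\<dots> = prod_mset (image_mset (max s) (mset (dsl S a)))" by (simp add: dsl_props)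
  also have "\<dots> = prod_list (map (max s) (dsl S a))" by (metis mset_map prod_mset_prod_list)
  also have "\<dots> = (\<Prod>j<size S. max s (dsl S a ! j))"
    by (simp add: prod.list_conv_set_nth dsl_props atLeast0LessThan)
  also have "\<dots> = (\<Prod>i<size S. max s (dsl S a ! (size S - Suc i)))"
    by (rule prod.nat_diff_reindex[symmetric])
  also have "\<dots> = (\<Prod>i<size S. max s (td S a i))" by (simp add: td_def)
  finally show ?thesis .
qed

lemma td_antimono: "i \<le> j \<Longrightarrow> j < size S \<Longrightarrow> td S a j \<le> td S a i"
  unfolding td_def by (rule sorted_nth_mono) (auto simp: dsl_props)

lemma td_in: "i < size S \<Longrightarrow> \<exists>b\<in>#S. td S a i = cmod (a - b)"
proof -
  assume i: "i < size S"
  have "td S a i \<in> set (dsl S a)" unfolding td_def using i by (simp add: dsl_props)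
  then have "td S a i \<in># mset (dsl S a)" by simp
  then show ?thesis by (auto simp: dsl_props)
qed

lemma td_nonneg: "i < size S \<Longrightarrow> 0 \<le> td S a i"
proof -
  assume "i < size S"
  then obtain b where "td S a i = cmod (a - b)" using td_in by blast
  then show ?thesis by simp
qed

lemma submset_exists:
  assumes "a \<in># F" "1 \<le> m" "m \<le> size F"
  shows "\<exists>T. T \<subseteq># F \<and> a \<in># T \<and> size T = m"
proof -
  define F' where "F' = F - {#a#}"
  have F: "F = add_mset a F'" using assms(1) by (simp add: F'_def)
  obtain xs where xs: "mset xs = F'" using ex_mset by blast
  define T where "T = add_mset a (mset (take (m - 1) xs))"
  have "mset (take (m - 1) xs) \<subseteq># mset xs"
    by (metis append_take_drop_id mset_append mset_subset_eq_add_left)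
  then have "mset (take (m - 1) xs) \<subseteq># F'" using xs by simp
  then have "T \<subseteq># F" unfolding T_def F by simp
  moreover have "size T = m"
    using assms(2,3) xs F by (auto simp: T_def min_def)
  ultimately show ?thesis by (auto simp: T_def)
qed

lemma filter_mset_all: "(\<And>x. x \<in># M \<Longrightarrow> P x) \<Longrightarrow> filter_mset P M = M"
  by (simp add: filter_mset_eq_conv)

lemma cs_set_facts:
  assumes "a \<in># S" "i < size S"
  defines "X \<equiv> {diameter (set_mset T) | T. T \<subseteq># S \<and> size T = size S - i \<and> a \<in># T}"
  shows "X \<noteq> {}" "bdd_below X" "cluster_scale S i a = Inf X"
proof -
  have "\<exists>T. T \<subseteq># S \<and> a \<in># T \<and> size T = size S - i"
    by (rule submset_exists) (use assms in auto)
  then obtain T where "T \<subseteq># S" "a \<in># T" "size T = size S - i" by blast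
  then show "X \<noteq> {}" unfolding X_def by blast
  have "\<forall>x\<in>X. 0 \<le> x" unfolding X_def by (auto intro!: diameter_ge_0 finite_imp_bounded)
  then show "bdd_below X" by (meson bdd_below_def)
  show "cluster_scale S i a = Inf X" by (simp add: cluster_scale_def X_def)
qed

lemma cs_nonneg:
  assumes "a \<in># S" "i < size S"
  shows "0 \<le> cluster_scale S i a"
proof -
  note f = cs_set_facts[OF assms]
  show ?thesis unfolding f(3)
    by (rule cInf_greatest[OF f(1)]) (auto intro!: diameter_ge_0 finite_imp_bounded)
qed

lemma td_le_cs:
  assumes a: "a \<in># S" and i: "i < size S"
  shows "td S a i \<le> cluster_scale S i a"
proof -
  note f = cs_set_facts[OF assms]
  define t where "t = td S a i"
  define j where "j = size S - 1 - i"
  have tj: "t = dsl S a ! j" by (simp add: t_def td_def j_def)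
  have j: "j < length (dsl S a)" using i by (simp add: dsl_props j_def)
  show ?thesis unfolding f(3) t_def[symmetric]
  proof (rule cInf_greatest[OF f(1)])
    fix x assume "x \<in> {diameter (set_mset T) | T. T \<subseteq># S \<and> size T = size S - i \<and> a \<in># T}"
    then obtain T where T: "x = diameter (set_mset T)" "T \<subseteq># S" "size T = size S - i" "a \<in># T"
      by blast
    have "\<exists>b\<in>#T. t \<le> cmod (a - b)"
    proof (rule ccontr)
      assume "\<not> ?thesis"
      then have lt: "\<And>b. b \<in># T \<Longrightarrow> cmod (a - b) < t" by force
      define d where "d = (\<lambda>b. cmod (a - b))"
      have "image_mset d T = filter_mset (\<lambda>x. x < t) (image_mset d T)"
        by (rule filter_mset_all[symmetric]) (auto simp: d_def lt)
      also have "\<dots> \<subseteq># filter_mset (\<lambda>x. x < t) (image_mset d S)"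
        by (rule multiset_filter_mono, rule image_mset_subseteq_mono, fact)
      also have "image_mset d S = mset (dsl S a)" by (simp add: dsl_props d_def)
      finally have "size (image_mset d T) \<le> size (filter_mset (\<lambda>x. x < t) (mset (dsl S a)))"
        by (rule size_mset_mono)
      also have "\<dots> = length (filter (\<lambda>x. x < t) (dsl S a))"
        by (metis mset_filter size_mset)
      also have "\<dots> \<le> j" unfolding tj by (rule sorted_count_less[OF dsl_props(1) j])
      finally show False using T(3) i by (simp add: j_def)
    qed
    then obtain b where b: "b \<in># T" "t \<le> cmod (a - b)" by blast
    have "cmod (a - b) = dist a b" by (simp add: dist_norm)
    also have "\<dots> \<le> diameter (set_mset T)"
      by (rule diameter_bounded_bound) (use T b in \<open>auto intro: finite_imp_bounded\<close>)
    finally show "t \<le> x" using b T by simp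
  qed
qed

lemma cs_le_td:
  assumes a: "a \<in># S" and i: "i < size S"
  shows "cluster_scale S i a \<le> 2 * td S a i"
proof -
  note f = cs_set_facts[OF assms]
  define t where "t = td S a i"
  define j where "j = size S - 1 - i"
  have tj: "t = dsl S a ! j" by (simp add: t_def td_def j_def)
  have j: "j < length (dsl S a)" using i by (simp add: dsl_props j_def)
  have t0: "0 \<le> t" using td_nonneg[OF i] by (simp add: t_def)
  define d where "d = (\<lambda>b. cmod (a - b))"
  define F where "F = filter_mset (\<lambda>b. d b \<le> t) S"
  have "size F = size (image_mset d F)" by simp
  also have "image_mset d F = filter_mset (\<lambda>x. x \<le> t) (image_mset d S)"
    unfolding F_def by (rule image_mset_filter_mset_swap)
  also have "image_mset d S = mset (dsl S a)" by (simp add: dsl_props d_def)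
  also have "size (filter_mset (\<lambda>x. x \<le> t) (mset (dsl S a))) = length (filter (\<lambda>x. x \<le> t) (dsl S a))"
    by (metis mset_filter size_mset)
  finally have szF: "j + 1 \<le> size F" using sorted_count_le[OF dsl_props(1) j] tj by simp
  have aF: "a \<in># F" using a t0 by (simp add: F_def d_def)
  have "\<exists>T. T \<subseteq># F \<and> a \<in># T \<and> size T = size S - i"
    by (rule submset_exists[OF aF]) (use szF i in \<open>auto simp: j_def\<close>)
  then obtain T where T: "T \<subseteq># F" "a \<in># T" "size T = size S - i" by blast
  have TS: "T \<subseteq># S" using T(1) unfolding F_def by (meson multiset_filter_subset subset_mset.order_trans)
  have Tt: "\<And>b. b \<in># T \<Longrightarrow> cmod (a - b) \<le> t"
    using T(1) by (auto simp: F_def d_def dest!: mset_subset_eqD)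
  have "diameter (set_mset T) \<le> 2 * t"
  proof (rule diameter_le)
    show "set_mset T \<noteq> {} \<or> 0 \<le> 2 * t" using t0 by simp
    fix x y assume "x \<in> set_mset T" "y \<in> set_mset T"
    then have "cmod (a - x) \<le> t" "cmod (a - y) \<le> t" using Tt by auto
    moreover have "cmod (x - y) \<le> cmod (a - x) + cmod (a - y)"
      using norm_triangle_ineq[of "x - a" "a - y"] norm_minus_commute[of x a] by simp
    ultimately show "norm (x - y) \<le> 2 * t" by simp
  qed
  moreover have "Inf {diameter (set_mset T) | T. T \<subseteq># S \<and> size T = size S - i \<and> a \<in># T} \<le> diameter (set_mset T)"
    by (rule cInf_lower) (use T TS f(2) in auto)
  ultimately show ?thesis unfolding f(3) t_def by simp
qed

lemma td_less:
  assumes "set_mset S \<subseteq> ball 0 (L / 2)" "a \<in># S" "i < size S"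
  shows "td S a i < L"
proof -
  obtain b where b: "b \<in># S" "td S a i = cmod (a - b)" using td_in[OF assms(3)] by blast
  have "cmod a < L / 2" "cmod b < L / 2" using assms(1,2) b(1) by auto
  moreover have "cmod (a - b) \<le> cmod a + cmod b" by (rule norm_triangle_ineq4)
  ultimately show ?thesis using b by simp
qed

lemma sum_split_k:
  fixes f :: "nat \<Rightarrow> real"
  assumes "k < N"
  shows "(\<Sum>i<N. f i) = (\<Sum>i<k. f i) + f k + (\<Sum>i\<in>{Suc k..<N}. f i)"
proof -
  have "(\<Sum>i<N. f i) = (\<Sum>i<Suc k. f i) + (\<Sum>i\<in>{Suc k..<N}. f i)"
    using assms by (metis Suc_leI lessThan_atLeast0 sum.atLeastLessThan_concat zero_le)
  then show ?thesis by simp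
qed

lemma log1d_upper_A:
  fixes a \<delta> \<eta> \<Lambda> s :: real and N :: nat and t :: "nat \<Rightarrow> real"
  assumes "0 < s" "s \<le> 2 * \<Lambda>" "0 < \<eta>" "\<eta> \<le> a + 2 - N * \<delta>" "0 \<le> \<delta>" "0 \<le> a"
    and tnn: "\<And>i. i < N \<Longrightarrow> 0 \<le> t i"
  shows "(a + 2) * ln s - \<delta> * (\<Sum>i<N. ln (max s (t i))) + (N * \<delta> - (a + 2)) * ln \<Lambda>
         \<le> (a + 2) * ln 2 - \<eta> * \<bar>ln s - ln (2 * \<Lambda>)\<bar>"
proof -
  have L: "0 < \<Lambda>" using assms by simp
  have "(\<Sum>i<N. ln s) \<le> (\<Sum>i<N. ln (max s (t i)))"
    by (rule sum_mono) (use assms in auto)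
  then have "N * ln s \<le> (\<Sum>i<N. ln (max s (t i)))" by simp
  then have g: "\<delta> * (N * ln s) \<le> \<delta> * (\<Sum>i<N. ln (max s (t i)))"
    using assms by (intro mult_left_mono) auto
  define e where "e = a + 2 - N * \<delta>"
  define x where "x = ln s - ln (2 * \<Lambda>)"
  have x: "x \<le> 0" using assms L by (simp add: x_def)
  have l2: "ln (2 * \<Lambda>) = ln 2 + ln \<Lambda>" using L by (simp add: ln_mult)
  have "e * x \<le> \<eta> * x" using x assms by (intro mult_right_mono_neg) (auto simp: e_def)
  moreover have "e * ln 2 \<le> (a + 2) * ln 2" using assms by (intro mult_right_mono) (auto simp: e_def)
  moreover have "\<bar>x\<bar> = - x" using x by simp
  ultimately show ?thesis using g unfolding x_def e_def l2
    by (simp add: algebra_simps)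
qed

lemma log1d_upper_B:
  fixes a \<delta> \<eta> s :: real and N k :: nat and t L :: "nat \<Rightarrow> real"
  assumes kN: "k < N" and s: "0 < s" and eta: "0 < \<eta>"
    and e1: "\<eta> \<le> a + 2 - (real N - real k - 1) * \<delta>"
    and e2: "\<eta> \<le> (real N - real k) * \<delta> - (a + 2)"
    and d: "0 \<le> \<delta>" and a: "0 \<le> a"
    and anti: "\<And>i j. i \<le> j \<Longrightarrow> j < N \<Longrightarrow> t j \<le> t i"
    and tk: "0 < t k"
    and Lt: "\<And>i. i < N \<Longrightarrow> t i \<le> L i \<and> L i \<le> 2 * t i"
  shows "(a + 2) * ln s - \<delta> * (\<Sum>i<N. ln (max s (t i)))
           + (((real N - real k) * \<delta> - (a + 2)) * ln (L k) + \<delta> * (\<Sum>i<k. ln (L i)))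
         \<le> N * \<delta> * ln 2 - \<eta> * \<bar>ln s - ln (t k)\<bar>"
proof -
  have tpos: "\<And>i. i \<le> k \<Longrightarrow> 0 < t i" using anti kN tk by (meson order.strict_trans2)
  define X where "X = (\<Sum>i<k. ln (t i))"
  define m where "m = ln (max s (t k))"
  define Y where "Y = (\<Sum>i<N. ln (max s (t i)))"
  define Z where "Z = (\<Sum>i<k. ln (L i))"
  define E where "E = (real N - real k) * \<delta> - (a + 2)"
  have Ysplit: "Y = (\<Sum>i<k. ln (max s (t i))) + m + (\<Sum>i\<in>{Suc k..<N}. ln (max s (t i)))"
    unfolding Y_def m_def by (rule sum_split_k[OF kN])
  have "X \<le> (\<Sum>i<k. ln (max s (t i)))"
    unfolding X_def
  proof (rule sum_mono)
    fix i assume "i \<in> {..<k}"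
    then have "0 < t i" using tpos by auto
    then show "ln (t i) \<le> ln (max s (t i))" by (subst ln_le_cancel_iff) auto
  qed
  moreover have "(\<Sum>i\<in>{Suc k..<N}. ln s) \<le> (\<Sum>i\<in>{Suc k..<N}. ln (max s (t i)))"
    by (rule sum_mono) (use s in auto)
  moreover have "(\<Sum>i\<in>{Suc k..<N}. ln s) = (real N - real k - 1) * ln s"
    using kN by (simp add: of_nat_diff)
  ultimately have "X + m + (real N - real k - 1) * ln s \<le> Y" using Ysplit by linarith
  then have "\<delta> * (X + m + (real N - real k - 1) * ln s) \<le> \<delta> * Y"
    using d by (rule mult_left_mono)
  then have dY: "\<delta> * X + \<delta> * m + \<delta> * ((real N - real k - 1) * ln s) \<le> \<delta> * Y"
    by (simp add: distrib_left)
  have "Z \<le> (\<Sum>i<k. ln 2 + ln (t i))"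
    unfolding Z_def
  proof (rule sum_mono)
    fix i assume i: "i \<in> {..<k}"
    then have "i < N" "0 < t i" using kN tpos by auto
    then have "ln (L i) \<le> ln (2 * t i)" using Lt[of i] by simp
    then show "ln (L i) \<le> ln 2 + ln (t i)" using \<open>0 < t i\<close> by (simp add: ln_mult)
  qed
  then have "Z \<le> k * ln 2 + X" by (simp add: sum.distrib X_def)
  then have "\<delta> * Z \<le> \<delta> * (k * ln 2 + X)" using d by (rule mult_left_mono)
  then have dZ: "\<delta> * Z \<le> \<delta> * (k * ln 2) + \<delta> * X" by (simp add: distrib_left)
  have "ln (L k) \<le> ln (2 * t k)" using Lt[of k] kN tk by simp
  then have "ln (L k) \<le> ln 2 + ln (t k)" using tk by (simp add: ln_mult)
  moreover have E0: "0 \<le> E" using e2 eta unfolding E_def by linarith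
  ultimately have "E * ln (L k) \<le> E * (ln 2 + ln (t k))" by (rule mult_left_mono)
  then have eL: "E * ln (L k) \<le> E * ln 2 + E * ln (t k)" by (simp add: distrib_left)
  have l2: "0 < ln (2::real)" by simp
  have Eb: "(E + \<delta> * k) * ln 2 \<le> N * \<delta> * ln 2"
    using a l2 by (intro mult_right_mono) (auto simp: E_def algebra_simps)
  show ?thesis
  proof (cases "s \<le> t k")
    case True
    then have mm: "m = ln (t k)" by (simp add: m_def max_def)
    have le: "ln s - ln (t k) \<le> 0" using True s by simp
    have "(a + 2 - (real N - real k - 1) * \<delta>) * (ln s - ln (t k)) \<le> \<eta> * (ln s - ln (t k))"
      using le e1 by (intro mult_right_mono_neg) auto
    moreover have "\<eta> * \<bar>ln s - ln (t k)\<bar> = - (\<eta> * (ln s - ln (t k)))" using le by (simp add: algebra_simps)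
    moreover have "(a + 2) * ln s - \<delta> * ((real N - real k - 1) * ln s) - \<delta> * ln (t k) + E * ln (t k)
        = (a + 2 - (real N - real k - 1) * \<delta>) * (ln s - ln (t k))"
      by (simp add: E_def algebra_simps)
    moreover have "E * ln 2 + \<delta> * (k * ln 2) = (E + \<delta> * k) * ln 2" by (simp add: algebra_simps)
    ultimately show ?thesis using dY dZ eL Eb unfolding Y_def[symmetric] Z_def[symmetric] E_def[symmetric] mm
      by linarith
  next
    case False
    then have mm: "m = ln s" by (simp add: m_def max_def)
    have le: "0 \<le> ln s - ln (t k)" using False tk by simp
    have "\<eta> * (ln s - ln (t k)) \<le> E * (ln s - ln (t k))"
      using le e2 by (intro mult_right_mono) (auto simp: E_def)
    moreover have "\<eta> * \<bar>ln s - ln (t k)\<bar> = \<eta> * (ln s - ln (t k))" using le by simp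
    moreover have "(a + 2) * ln s - \<delta> * ((real N - real k - 1) * ln s) - \<delta> * ln s + E * ln (t k)
        = - (E * (ln s - ln (t k)))"
      by (simp add: E_def algebra_simps)
    moreover have "E * ln 2 + \<delta> * (k * ln 2) = (E + \<delta> * k) * ln 2" by (simp add: algebra_simps)
    ultimately show ?thesis using dY dZ eL Eb unfolding Y_def[symmetric] Z_def[symmetric] E_def[symmetric] mm
      by linarith
  qed
qed

lemma sum_if_less:
  fixes f :: "nat \<Rightarrow> real"
  assumes "k \<le> N"
  shows "(\<Sum>i<N. if i < k then f i else c) = (\<Sum>i<k. f i) + (real N - real k) * c"
proof -
  have "(\<Sum>i<N. if i < k then f i else c) = (\<Sum>i<k. if i < k then f i else c) + (\<Sum>i\<in>{k..<N}. if i < k then f i else c)"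
    using assms by (metis lessThan_atLeast0 sum.atLeastLessThan_concat zero_le)
  also have "(\<Sum>i<k. if i < k then f i else c) = (\<Sum>i<k. f i)" by simp
  also have "(\<Sum>i\<in>{k..<N}. if i < k then f i else c) = (\<Sum>i\<in>{k..<N}. c)" by simp
  also have "\<dots> = (real N - real k) * c" using assms by (simp add: of_nat_diff)
  finally show ?thesis .
qed

lemma log1d_lower_A:
  fixes a \<delta> \<Lambda> :: real and N :: nat and t :: "nat \<Rightarrow> real"
  assumes L: "0 < \<Lambda>" and d: "0 \<le> \<delta>" and tl: "\<And>i. i < N \<Longrightarrow> t i < \<Lambda>"
  shows "- ((a + 2) * ln 4) \<le> (a + 2) * ln (\<Lambda> / 4) - \<delta> * (\<Sum>i<N. ln (max (\<Lambda> / 4) (t i))) + (N * \<delta> - (a + 2)) * ln \<Lambda>"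
proof -
  have "(\<Sum>i<N. ln (max (\<Lambda> / 4) (t i))) \<le> (\<Sum>i<N. ln \<Lambda>)"
  proof (rule sum_mono)
    fix i assume "i \<in> {..<N}"
    then have "t i < \<Lambda>" using tl by auto
    then show "ln (max (\<Lambda> / 4) (t i)) \<le> ln \<Lambda>" using L by (subst ln_le_cancel_iff) auto
  qed
  then have "\<delta> * (\<Sum>i<N. ln (max (\<Lambda> / 4) (t i))) \<le> \<delta> * (N * ln \<Lambda>)"
    using d by (simp add: mult_left_mono)
  moreover have "(a + 2) * ln (\<Lambda> / 4) = (a + 2) * ln \<Lambda> - (a + 2) * ln 4" using L by (simp add: ln_div algebra_simps)
  moreover have "(a + 2) * ln \<Lambda> - (a + 2) * ln 4 - \<delta> * (N * ln \<Lambda>) + (N * \<delta> - (a + 2)) * ln \<Lambda> = - ((a + 2) * ln 4)"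
    by (simp add: algebra_simps)
  ultimately show ?thesis by linarith
qed

lemma log1d_lower_B:
  fixes a \<delta> :: real and N k :: nat and t L :: "nat \<Rightarrow> real"
  assumes kN: "k < N" and E0: "0 \<le> (real N - real k) * \<delta> - (a + 2)"
    and d: "0 \<le> \<delta>"
    and anti: "\<And>i j. i \<le> j \<Longrightarrow> j < N \<Longrightarrow> t j \<le> t i"
    and tk: "0 < t k"
    and Lt: "\<And>i. i < N \<Longrightarrow> t i \<le> L i"
  shows "- ((a + 2) * ln 4) \<le> (a + 2) * ln (t k / 4) - \<delta> * (\<Sum>i<N. ln (max (t k / 4) (t i)))
           + (((real N - real k) * \<delta> - (a + 2)) * ln (L k) + \<delta> * (\<Sum>i<k. ln (L i)))"
proof -
  have tpos: "\<And>i. i \<le> k \<Longrightarrow> 0 < t i" using anti kN tk by (meson order.strict_trans2)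
  define X where "X = (\<Sum>i<k. ln (t i))"
  define E where "E = (real N - real k) * \<delta> - (a + 2)"
  have "(\<Sum>i<N. ln (max (t k / 4) (t i))) \<le> (\<Sum>i<N. if i < k then ln (t i) else ln (t k))"
  proof (rule sum_mono)
    fix i assume i: "i \<in> {..<N}"
    show "ln (max (t k / 4) (t i)) \<le> (if i < k then ln (t i) else ln (t k))"
    proof (cases "i < k")
      case True
      then have "t k \<le> t i" "0 < t i" using anti[of i k] kN tpos by auto
      then show ?thesis using True tk by (subst if_P) (auto simp: ln_le_cancel_iff)
    next
      case False
      then have "t i \<le> t k" using anti[of k i] i by auto
      then show ?thesis using False tk by (subst if_not_P) (auto simp: ln_le_cancel_iff)
    qed
  qed
  also have "\<dots> = X + (real N - real k) * ln (t k)" unfolding X_def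
    by (rule sum_if_less) (use kN in simp)
  finally have "\<delta> * (\<Sum>i<N. ln (max (t k / 4) (t i))) \<le> \<delta> * (X + (real N - real k) * ln (t k))"
    using d by (simp add: mult_left_mono)
  moreover have "X \<le> (\<Sum>i<k. ln (L i))" unfolding X_def
  proof (rule sum_mono)
    fix i assume "i \<in> {..<k}"
    then have "0 < t i" "t i \<le> L i" using tpos Lt kN by auto
    then show "ln (t i) \<le> ln (L i)" by (subst ln_le_cancel_iff) auto
  qed
  then have "\<delta> * X \<le> \<delta> * (\<Sum>i<k. ln (L i))" using d by (simp add: mult_left_mono)
  moreover have "ln (t k) \<le> ln (L k)" using tk Lt[of k] kN by (subst ln_le_cancel_iff) auto
  then have "E * ln (t k) \<le> E * ln (L k)" using E0 by (simp add: E_def mult_left_mono)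
  moreover have "(a + 2) * ln (t k / 4) = (a + 2) * ln (t k) - (a + 2) * ln 4" using tk by (simp add: ln_div algebra_simps)
  moreover have "(a + 2) * ln (t k) - (a + 2) * ln 4 - \<delta> * (X + (real N - real k) * ln (t k)) + (E * ln (t k) + \<delta> * X)
                 = - ((a + 2) * ln 4)" by (simp add: E_def algebra_simps)
  ultimately show ?thesis unfolding E_def[symmetric] by linarith
qed

lemma log1d_lower_B0:
  fixes a \<delta> \<eta> \<Lambda> B :: real and N k :: nat and t :: "nat \<Rightarrow> real"
  assumes kN: "k < N" and eta: "0 < \<eta>" and E0: "\<eta> \<le> (real N - real k) * \<delta> - (a + 2)"
    and d: "0 \<le> \<delta>" and L: "0 < \<Lambda>"
    and anti: "\<And>i j. i \<le> j \<Longrightarrow> j < N \<Longrightarrow> t j \<le> t i"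
    and tnn: "\<And>i. i < N \<Longrightarrow> 0 \<le> t i"
    and tk: "t k = 0"
    and tl: "\<And>i. i < N \<Longrightarrow> t i < \<Lambda>"
  shows "\<exists>s. 0 < s \<and> s \<le> \<Lambda> / 4 \<and> B \<le> (a + 2) * ln s - \<delta> * (\<Sum>i<N. ln (max s (t i)))"
proof -
  define E where "E = (real N - real k) * \<delta> - (a + 2)"
  have Epos: "0 < E" using eta E0 by (simp add: E_def)
  define s0 where "s0 = exp (- (\<bar>B\<bar> + \<delta> * k * \<bar>ln \<Lambda>\<bar>) / E)"
  define s where "s = min (\<Lambda> / 4) s0"
  have s: "0 < s" "s \<le> \<Lambda> / 4" "s \<le> s0" using L by (auto simp: s_def s0_def)
  have "ln s \<le> ln s0" using s by (subst ln_le_cancel_iff) (auto simp: s0_def)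
  then have "ln s \<le> - (\<bar>B\<bar> + \<delta> * k * \<bar>ln \<Lambda>\<bar>) / E" by (simp add: s0_def)
  then have lsE: "E * ln s \<le> - (\<bar>B\<bar> + \<delta> * k * \<bar>ln \<Lambda>\<bar>)" using Epos by (simp add: field_simps)
  have "(\<Sum>i<N. ln (max s (t i))) \<le> (\<Sum>i<N. if i < k then ln \<Lambda> else ln s)"
  proof (rule sum_mono)
    fix i assume i: "i \<in> {..<N}"
    show "ln (max s (t i)) \<le> (if i < k then ln \<Lambda> else ln s)"
    proof (cases "i < k")
      case True
      then have "t i < \<Lambda>" using tl i by auto
      then show ?thesis using True s L by (subst if_P) (auto simp: ln_le_cancel_iff)
    next
      case False
      then have "t i \<le> 0" using anti[of k i] i tk by auto
      then have "max s (t i) = s" using s by auto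
      then show ?thesis using False by simp
    qed
  qed
  also have "\<dots> = k * ln \<Lambda> + (real N - real k) * ln s"
    by (subst sum_if_less) (use kN in auto)
  finally have "\<delta> * (\<Sum>i<N. ln (max s (t i))) \<le> \<delta> * (k * ln \<Lambda> + (real N - real k) * ln s)"
    using d by (simp add: mult_left_mono)
  moreover have "\<delta> * k * ln \<Lambda> \<le> \<delta> * k * \<bar>ln \<Lambda>\<bar>" using d by (intro mult_left_mono) auto
  moreover have "(a + 2) * ln s - \<delta> * (k * ln \<Lambda> + (real N - real k) * ln s) = - (E * ln s) - \<delta> * k * ln \<Lambda>"
    by (simp add: E_def algebra_simps)
  ultimately have "\<bar>B\<bar> \<le> (a + 2) * ln s - \<delta> * (\<Sum>i<N. ln (max s (t i)))" using lsE by linarith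
  then show ?thesis using s by (intro exI[of _ s]) auto
qed

lemma geo_dist_sum:
  fixes q :: real
  assumes q: "0 \<le> q" "q < 1"
  shows "(\<Sum>j<n. q ^ (if j \<le> m then m - j else j - m)) \<le> 2 / (1 - q)"
proof -
  have geo: "\<And>n. (\<Sum>i<n. q ^ i) \<le> 1 / (1 - q)"
  proof -
    fix n
    have "(\<Sum>i<n. q ^ i) = (1 - q ^ n) / (1 - q)" using q by (simp add: sum_gp_strict)
    also have "\<dots> \<le> 1 / (1 - q)" using q by (intro divide_right_mono) auto
    finally show "(\<Sum>i<n. q ^ i) \<le> 1 / (1 - q)" .
  qed
  have split: "(\<Sum>j<n. q ^ (if j \<le> m then m - j else j - m))
      = (\<Sum>j\<in>{j. j < n \<and> j \<le> m}. q ^ (m - j)) + (\<Sum>j\<in>{j. j < n \<and> \<not> j \<le> m}. q ^ (j - m))"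
  proof -
    have "(\<Sum>j<n. q ^ (if j \<le> m then m - j else j - m))
        = (\<Sum>j\<in>{..<n} \<inter> {j. j \<le> m}. q ^ (m - j)) + (\<Sum>j\<in>{..<n} \<inter> - {j. j \<le> m}. q ^ (j - m))"
      by (simp add: if_distrib sum.If_cases)
    moreover have "{..<n} \<inter> {j. j \<le> m} = {j. j < n \<and> j \<le> m}" "{..<n} \<inter> - {j. j \<le> m} = {j. j < n \<and> \<not> j \<le> m}"
      by auto
    ultimately show ?thesis by simp
  qed
  have A: "(\<Sum>j\<in>{j. j < n \<and> j \<le> m}. q ^ (m - j)) \<le> 1 / (1 - q)"
  proof -
    have "(\<Sum>j\<in>{j. j < n \<and> j \<le> m}. q ^ (m - j)) \<le> (\<Sum>j<Suc m. q ^ (m - j))"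
      by (rule sum_mono2) (use q in auto)
    also have "\<dots> = (\<Sum>j<Suc m. q ^ (Suc m - Suc j))" by simp
    also have "\<dots> = (\<Sum>j<Suc m. q ^ j)" by (rule sum.nat_diff_reindex)
    also have "\<dots> \<le> 1 / (1 - q)" by (rule geo)
    finally show ?thesis .
  qed
  have B: "(\<Sum>j\<in>{j. j < n \<and> \<not> j \<le> m}. q ^ (j - m)) \<le> 1 / (1 - q)"
  proof -
    have "(\<Sum>j\<in>{j. j < n \<and> \<not> j \<le> m}. q ^ (j - m)) \<le> (\<Sum>j\<in>{j. j < n \<and> \<not> j \<le> m}. q ^ (j - Suc m))"
    proof (rule sum_mono)
      fix j assume "j \<in> {j. j < n \<and> \<not> j \<le> m}"
      then have "j - Suc m \<le> j - m" by auto
      then show "q ^ (j - m) \<le> q ^ (j - Suc m)" using q by (intro power_decreasing) auto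
    qed
    also have "\<dots> = (\<Sum>i\<in>(\<lambda>j. j - Suc m) ` {j. j < n \<and> \<not> j \<le> m}. q ^ i)"
      by (rule sum.reindex[symmetric, unfolded o_def]) (auto simp: inj_on_def)
    also have "\<dots> \<le> (\<Sum>i<n. q ^ i)"
      by (rule sum_mono2) (use q in auto)
    also have "\<dots> \<le> 1 / (1 - q)" by (rule geo)
    finally show ?thesis .
  qed
  show ?thesis using split A B by simp
qed

lemma emeasure_ball_complex:
  "0 \<le> r \<Longrightarrow> emeasure lborel (ball (c::complex) r) = ennreal (pi * r ^ 2)"
  using emeasure_ball[of r c] by (simp add: unit_ball_vol_2)

lemma emeasure_cball_complex:
  "0 \<le> r \<Longrightarrow> emeasure lborel (cball (c::complex) r) = ennreal (pi * r ^ 2)"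
  using emeasure_cball[of r c] by (simp add: unit_ball_vol_2)

lemma good_set_measure:
  fixes W :: "complex set" and s \<eta> :: real and a :: complex
  assumes W: "finite W" and s: "0 < s" and eta: "0 < \<eta>" and cw: "real (card W) * \<eta>^2 \<le> 1/2"
  shows "ennreal (pi * s^2 / 2) \<le> emeasure lborel (ball a s - (\<Union>w\<in>W. ball w (\<eta> * s)))"
proof -
  define U where "U = (\<Union>w\<in>W. ball w (\<eta> * s))"
  define E where "E = ball a s - U"
  have oU: "open U" unfolding U_def by auto
  have UE: "U \<in> sets lborel" "E \<in> sets lborel" unfolding E_def using oU by (auto intro!: borel_open)
  have "emeasure lborel U \<le> (\<Sum>w\<in>W. emeasure lborel (ball w (\<eta> * s)))"
    unfolding U_def by (rule emeasure_subadditive_finite) (use W in auto)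
  also have "\<dots> = (\<Sum>w\<in>W. ennreal (pi * (\<eta> * s)^2))"
    using eta s by (intro sum.cong refl emeasure_ball_complex) auto
  also have "\<dots> = ennreal (real (card W) * (pi * (\<eta> * s)^2))"
    by (simp add: ennreal_of_nat_eq_real_of_nat ennreal_mult)
  also have "\<dots> \<le> ennreal (pi * s^2 / 2)"
  proof (rule ennreal_leI)
    have "real (card W) * (pi * (\<eta> * s)^2) = (real (card W) * \<eta>^2) * (pi * s^2)"
      by (simp add: power_mult_distrib)
    also have "\<dots> \<le> (1/2) * (pi * s^2)" using cw by (intro mult_right_mono) auto
    finally show "real (card W) * (pi * (\<eta> * s)^2) \<le> pi * s^2 / 2" by simp
  qed
  finally have Ub: "emeasure lborel U \<le> ennreal (pi * s^2 / 2)" .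
  have "ennreal (pi * s^2) = emeasure lborel (ball a s)"
    using emeasure_ball_complex[of s a] s by simp
  also have "\<dots> \<le> emeasure lborel (E \<union> U)"
    by (rule emeasure_mono) (use UE in \<open>auto simp: E_def\<close>)
  also have "\<dots> \<le> emeasure lborel E + emeasure lborel U"
    by (rule emeasure_subadditive) (use UE in auto)
  also have "\<dots> \<le> emeasure lborel E + ennreal (pi * s^2 / 2)"
    by (rule add_left_mono[OF Ub])
  finally have *: "ennreal (pi * s^2) \<le> emeasure lborel E + ennreal (pi * s^2 / 2)" .
  show ?thesis
  proof (cases "emeasure lborel E" rule: ennreal_cases)
    case (real e)
    have "ennreal (e + pi * s^2 / 2) = ennreal e + ennreal (pi * s^2 / 2)"
      using real s by (intro ennreal_plus) auto
    then have "ennreal (pi * s^2) \<le> ennreal (e + pi * s^2 / 2)"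
      using * real by simp
    then have "pi * s^2 \<le> e + pi * s^2 / 2" using real s by (subst (asm) ennreal_le_iff) auto
    then have "pi * s^2 / 2 \<le> e" by simp
    then show ?thesis using real by (simp add: E_def U_def)
  next
    case top then show ?thesis by (simp add: E_def U_def)
  qed
qed

lemma lower_integral:
  fixes f :: "complex \<Rightarrow> real" and W :: "complex set" and A :: "complex set"
  assumes W: "finite W" and s: "0 < s" and eta: "0 < \<eta>" and cw: "real (card W) * \<eta>^2 \<le> 1/2"
    and sub: "ball a s \<subseteq> A" and v: "0 \<le> v"
    and bnd: "\<And>z. z \<in> ball a s \<Longrightarrow> (\<And>w. w \<in> W \<Longrightarrow> \<eta> * s \<le> dist w z) \<Longrightarrow> v \<le> f z"
  shows "ennreal (v * (pi * s^2 / 2)) \<le> set_nn_integral lborel A (\<lambda>z. ennreal (f z))"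
proof -
  define E where "E = ball a s - (\<Union>w\<in>W. ball w (\<eta> * s))"
  have oU: "open (\<Union>w\<in>W. ball w (\<eta> * s))" by auto
  have Es: "E \<in> sets lborel" unfolding E_def using oU by (auto intro!: borel_open)
  have "ennreal (v * (pi * s^2 / 2)) = ennreal v * ennreal (pi * s^2 / 2)"
    using v by (intro ennreal_mult) auto
  also have "\<dots> \<le> ennreal v * emeasure lborel E"
    unfolding E_def by (rule mult_left_mono[OF good_set_measure[OF W s eta cw]]) simp
  also have "\<dots> = (\<integral>\<^sup>+ z. ennreal v * indicator E z \<partial>lborel)"
    by (rule nn_integral_cmult_indicator[symmetric]) (rule Es)
  also have "\<dots> \<le> (\<integral>\<^sup>+ z. ennreal (f z) * indicator A z \<partial>lborel)"
  proof (rule nn_integral_mono)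
    fix z
    show "ennreal v * indicator E z \<le> ennreal (f z) * indicator A z"
    proof (cases "z \<in> E")
      case True
      then have "z \<in> ball a s" "\<And>w. w \<in> W \<Longrightarrow> \<eta> * s \<le> dist w z" unfolding E_def by auto
      then have "v \<le> f z" "z \<in> A" using bnd sub by auto
      then show ?thesis using True by (simp add: ennreal_leI)
    qed simp
  qed
  finally show ?thesis .
qed

definition ann :: "complex \<Rightarrow> real \<Rightarrow> nat \<Rightarrow> complex set" where
  "ann a \<rho> j = cball a (\<rho> / 2 ^ j) - cball a (\<rho> / 2 ^ Suc j)"

lemma ann_sets: "ann a \<rho> j \<in> sets lborel"
  unfolding ann_def by auto

lemma ann_measure: "0 \<le> \<rho> \<Longrightarrow> emeasure lborel (ann a \<rho> j) \<le> ennreal (pi * (\<rho> / 2 ^ j) ^ 2)"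
proof -
  assume r: "0 \<le> \<rho>"
  have "emeasure lborel (ann a \<rho> j) \<le> emeasure lborel (cball a (\<rho> / 2 ^ j))"
    by (rule emeasure_mono) (auto simp: ann_def)
  also have "\<dots> = ennreal (pi * (\<rho> / 2 ^ j) ^ 2)" using r by (intro emeasure_cball_complex) auto
  finally show ?thesis .
qed

lemma ann_exists:
  fixes r \<rho> :: real
  assumes r: "0 < r" "r \<le> \<rho>"
  shows "\<exists>j. \<rho> / 2 ^ Suc j < r \<and> r \<le> \<rho> / 2 ^ j"
proof -
  have ex: "\<exists>j. \<rho> / 2 ^ Suc j < r"
  proof -
    obtain n where n: "\<rho> / r < 2 ^ n" using real_arch_pow[of 2 "\<rho> / r"] by auto
    then have "\<rho> < r * 2 ^ n" using r by (simp add: field_simps)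
    then have "\<rho> / 2 ^ n < r" by (simp add: field_simps)
    moreover have "\<rho> / 2 ^ Suc n \<le> \<rho> / 2 ^ n" using r by (simp add: field_simps)
    ultimately show ?thesis by (intro exI[of _ n]) linarith
  qed
  define j where "j = (LEAST j. \<rho> / 2 ^ Suc j < r)"
  have j1: "\<rho> / 2 ^ Suc j < r" unfolding j_def by (rule LeastI_ex[OF ex])
  have "r \<le> \<rho> / 2 ^ j"
  proof (cases j)
    case 0 then show ?thesis using r by simp
  next
    case (Suc i)
    then have "\<not> (\<rho> / 2 ^ Suc i < r)" using not_less_Least[of i "\<lambda>j. \<rho> / 2 ^ Suc j < r"] j_def by auto
    then show ?thesis using Suc by simp
  qed
  then show ?thesis using j1 by blast
qed

lemma ann_mem: "z \<in> ann a \<rho> j \<longleftrightarrow> \<rho> / 2 ^ Suc j < cmod (z - a) \<and> cmod (z - a) \<le> \<rho> / 2 ^ j"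
  by (auto simp: ann_def dist_norm norm_minus_commute)

lemma powr_sum_le:
  fixes x :: "nat \<Rightarrow> real" and \<epsilon> :: real
  assumes x: "\<And>\<nu>. 0 \<le> x \<nu>" and e: "0 \<le> \<epsilon>"
  shows "(\<Sum>\<nu>\<le>M. x \<nu>) powr \<epsilon> \<le> (real M + 1) powr \<epsilon> * (\<Sum>\<nu>\<le>M. x \<nu> powr \<epsilon>)"
proof (cases "(\<Sum>\<nu>\<le>M. x \<nu>) = 0")
  case True
  have "0 \<le> (real M + 1) powr \<epsilon> * (\<Sum>\<nu>\<le>M. x \<nu> powr \<epsilon>)"
    by (intro mult_nonneg_nonneg sum_nonneg) auto
  then show ?thesis using True by simp
next
  case False
  define m where "m = Max (x ` {..M})"
  have "m \<in> x ` {..M}" unfolding m_def by (rule Max_in) auto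
  then obtain \<nu>0 where \<nu>0: "\<nu>0 \<le> M" "x \<nu>0 = m" by auto
  have le: "\<And>\<nu>. \<nu> \<le> M \<Longrightarrow> x \<nu> \<le> m" unfolding m_def by (rule Max_ge) auto
  have "(\<Sum>\<nu>\<le>M. x \<nu>) \<le> of_nat (card {..M}) * m"
    by (rule sum_bounded_above) (use le in auto)
  then have s: "(\<Sum>\<nu>\<le>M. x \<nu>) \<le> (real M + 1) * m" by (simp add: algebra_simps)
  have "(\<Sum>\<nu>\<le>M. x \<nu>) powr \<epsilon> \<le> ((real M + 1) * m) powr \<epsilon>"
    by (rule powr_mono2) (use e s x in \<open>auto intro: sum_nonneg\<close>)
  also have "\<dots> = (real M + 1) powr \<epsilon> * m powr \<epsilon>"
    using x \<nu>0 by (subst powr_mult) auto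
  also have "m powr \<epsilon> \<le> (\<Sum>\<nu>\<le>M. x \<nu> powr \<epsilon>)"
    using \<nu>0 by (intro member_le_sum[where f = "\<lambda>\<nu>. x \<nu> powr \<epsilon>", of \<nu>0, simplified \<nu>0]) auto
  then have "(real M + 1) powr \<epsilon> * m powr \<epsilon> \<le> (real M + 1) powr \<epsilon> * (\<Sum>\<nu>\<le>M. x \<nu> powr \<epsilon>)"
    by (intro mult_left_mono) auto
  finally show ?thesis .
qed

lemma poly_lower_good:
  fixes P :: "complex poly" and \<eta> s :: real
  assumes eta: "0 < \<eta>" "\<eta> \<le> 1" and s: "0 < s" and zs: "cmod (z - a) \<le> s"
    and far: "\<And>w. poly P w = 0 \<Longrightarrow> \<eta> * s \<le> cmod (z - w)" and P: "P \<noteq> 0"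
  shows "(\<eta> / 3) ^ degree P * (cmod (lead_coeff P) * (\<Prod>w\<in>#proots P. s + cmod (a - w))) \<le> cmod (poly P z)"
proof -
  have "(\<Prod>w\<in>#proots P. (\<eta> / 3) * (s + cmod (a - w))) \<le> (\<Prod>w\<in>#proots P. cmod (z - w))"
  proof (rule prod_mset_image_mono)
    fix w assume w: "w \<in># proots P"
    then have pw: "poly P w = 0" using P by simp
    have fw: "\<eta> * s \<le> cmod (z - w)" using far[OF pw] .
    have tri: "cmod (a - w) \<le> cmod (z - a) + cmod (z - w)"
      using norm_triangle_ineq[of "a - z" "z - w"] norm_minus_commute[of a z] by simp
    have "(\<eta> / 3) * (s + cmod (a - w)) \<le> cmod (z - w)"
    proof (cases "cmod (a - w) \<le> 2 * s")
      case True
      then have "(\<eta> / 3) * (s + cmod (a - w)) \<le> (\<eta> / 3) * (3 * s)"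
        using eta by (intro mult_left_mono) auto
      then show ?thesis using fw by simp
    next
      case False
      have "(\<eta> / 3) * (s + cmod (a - w)) \<le> (1 / 3) * (s + cmod (a - w))"
        using eta s by (intro mult_right_mono) auto
      also have "\<dots> \<le> cmod (z - w)" using False tri zs by simp
      finally show ?thesis .
    qed
    then show "0 \<le> (\<eta> / 3) * (s + cmod (a - w)) \<and> (\<eta> / 3) * (s + cmod (a - w)) \<le> cmod (z - w)"
      using eta s by simp
  qed
  then have "(\<eta> / 3) ^ size (proots P) * (\<Prod>w\<in>#proots P. s + cmod (a - w)) \<le> (\<Prod>w\<in>#proots P. cmod (z - w))"
    by (simp only: prod_mset_image_cmult)
  then have "(\<eta> / 3) ^ degree P * (\<Prod>w\<in>#proots P. s + cmod (a - w)) \<le> (\<Prod>w\<in>#proots P. cmod (z - w))"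
    by (simp only: size_proots_complex)
  then have "cmod (lead_coeff P) * ((\<eta> / 3) ^ degree P * (\<Prod>w\<in>#proots P. s + cmod (a - w)))
      \<le> cmod (lead_coeff P) * (\<Prod>w\<in>#proots P. cmod (z - w))"
    by (intro mult_left_mono) auto
  then show ?thesis by (simp add: cmod_poly_proots[of P z] mult.left_commute)
qed

lemma sum_exp_dist:
  fixes \<eta> c :: real
  assumes eta: "0 < \<eta>" and c: "0 \<le> c"
  shows "(\<Sum>j<n. exp (- \<eta> * \<bar>c - real j * ln 2\<bar>)) \<le> 2 / (exp (- \<eta> * ln 2) * (1 - exp (- \<eta> * ln 2)))"
proof -
  define l :: real where "l = ln 2"
  have l: "0 < l" by (simp add: l_def)
  define q where "q = exp (- \<eta> * l)"
  have q: "0 < q" "q < 1" using eta l by (auto simp: q_def)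
  define j0 where "j0 = nat \<lfloor>c / l\<rfloor>"
  have j0a: "real j0 * l \<le> c"
  proof -
    have "real j0 = of_int \<lfloor>c / l\<rfloor>" using c l by (simp add: j0_def)
    also have "\<dots> \<le> c / l" by simp
    finally show ?thesis using l by (simp add: field_simps)
  qed
  have j0b: "c < (real j0 + 1) * l"
  proof -
    have "c / l < of_int \<lfloor>c / l\<rfloor> + 1" by linarith
    also have "of_int \<lfloor>c / l\<rfloor> = real j0" using c l by (simp add: j0_def)
    finally show ?thesis using l by (simp add: field_simps)
  qed
  define dd where "dd = (\<lambda>j::nat. if j \<le> j0 then j0 - j else j - j0)"
  have tm: "exp (- \<eta> * \<bar>c - real j * l\<bar>) \<le> (1 / q) * q ^ dd j" for j
  proof -
    have "(real (dd j) - 1) * l \<le> \<bar>c - real j * l\<bar>"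
    proof (cases "j \<le> j0")
      case True
      then have "real (dd j) = real j0 - real j" by (simp add: dd_def of_nat_diff)
      then have "(real (dd j) - 1) * l \<le> (real j0 - real j) * l" using l by simp
      also have "\<dots> \<le> c - real j * l" using j0a by (simp add: algebra_simps)
      finally show ?thesis by simp
    next
      case False
      then have "real (dd j) = real j - real j0" by (simp add: dd_def of_nat_diff)
      then have "(real (dd j) - 1) * l = (real j - real j0 - 1) * l" by simp
      also have "\<dots> = real j * l - (real j0 + 1) * l" by (simp add: algebra_simps)
      also have "\<dots> \<le> real j * l - c" using j0b by simp
      finally show ?thesis by simp
    qed
    then have "- \<eta> * \<bar>c - real j * l\<bar> \<le> - \<eta> * ((real (dd j) - 1) * l)"
      using eta by simp
    then have "exp (- \<eta> * \<bar>c - real j * l\<bar>) \<le> exp (- \<eta> * ((real (dd j) - 1) * l))" by simp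
    also have "- \<eta> * ((real (dd j) - 1) * l) = real (dd j) * (- \<eta> * l) - (- \<eta> * l)"
      by (simp add: algebra_simps)
    also have "exp \<dots> = q ^ dd j / q"
    proof -
      have "q ^ dd j = exp (real (dd j) * (- \<eta> * l))" by (simp only: q_def exp_of_nat_mult)
      then show ?thesis by (simp only: exp_diff q_def)
    qed
    finally show ?thesis by simp
  qed
  have "(\<Sum>j<n. exp (- \<eta> * \<bar>c - real j * ln 2\<bar>)) \<le> (\<Sum>j<n. (1 / q) * q ^ dd j)"
    by (rule sum_mono) (use tm in \<open>simp add: l_def\<close>)
  also have "\<dots> = (1 / q) * (\<Sum>j<n. q ^ (if j \<le> j0 then j0 - j else j - j0))"
    by (simp add: sum_distrib_left dd_def)
  also have "\<dots> \<le> (1 / q) * (2 / (1 - q))"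
    using q by (intro mult_left_mono geo_dist_sum) auto
  also have "\<dots> = 2 / (exp (- \<eta> * ln 2) * (1 - exp (- \<eta> * ln 2)))"
    by (simp add: q_def l_def)
  finally show ?thesis .
qed

lemma exp_lw:
  assumes s: "0 < s"
  shows "s powr a * s ^ 2 / gq S b s powr \<delta>
         = exp ((a + 2) * ln s - \<delta> * (\<Sum>i<size S. ln (max s (td S b i))))"
proof -
  have pos: "\<And>i. 0 < max s (td S b i)" using s by (simp add: less_max_iff_disj)
  have g: "gq S b s = (\<Prod>i<size S. max s (td S b i))" by (rule gq_td)
  have gp: "0 < gq S b s" using gq_pos[OF s] .
  have "ln (gq S b s) = (\<Sum>i<size S. ln (max s (td S b i)))"
    unfolding g by (rule ln_prod) (use pos s in \<open>auto simp: max_def split: if_splits\<close>)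
  moreover have "s powr a * s ^ 2 = exp ((a + 2) * ln s)"
    using s by (simp add: powr_def exp_add[symmetric] algebra_simps flip: powr_realpow exp_of_nat_mult)
  moreover have "gq S b s powr \<delta> = exp (\<delta> * ln (gq S b s))" using gp by (simp add: powr_def mult.commute)
  ultimately show ?thesis by (simp add: exp_diff)
qed

lemma k_index_B:
  fixes \<epsilon> \<delta> :: real and N \<nu> :: nat
  assumes d: "0 \<le> \<delta>" and e: "0 \<le> \<epsilon>" and nA: "\<not> (real \<nu> * \<epsilon> + 2 > real N * \<delta>)"
    and hyp: "\<And>j. j \<le> N \<Longrightarrow> real \<nu> * \<epsilon> + 2 - real j * \<delta> \<noteq> 0"
  shows "\<exists>k<N. k_index \<epsilon> \<delta> N \<nu> = int k \<and> (real N - real k - 1) * \<delta> < real \<nu> * \<epsilon> + 2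
                \<and> real \<nu> * \<epsilon> + 2 < (real N - real k) * \<delta>"
proof -
  define x where "x = real \<nu> * \<epsilon> + 2"
  have "0 \<le> real \<nu> * \<epsilon>" using e by simp
  then have x0: "0 < x" by (simp add: x_def)
  have xN: "x < real N * \<delta>" using nA hyp[of N] by (auto simp: x_def)
  then have N0: "0 < N" using x0 d by (cases N) auto
  have ex: "\<exists>j. x < real (Suc j) * \<delta>" using xN N0 by (intro exI[of _ "N - 1"]) auto
  define j0 where "j0 = (LEAST j. x < real (Suc j) * \<delta>)"
  have j0a: "x < real (Suc j0) * \<delta>" unfolding j0_def by (rule LeastI_ex[OF ex])
  have j0N: "j0 < N"
  proof -
    have "j0 \<le> N - 1" unfolding j0_def by (rule Least_le) (use xN N0 in auto)
    then show ?thesis using N0 by simp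
  qed
  have j0b: "real j0 * \<delta> < x"
  proof (cases j0)
    case 0 then show ?thesis using x0 by simp
  next
    case (Suc i)
    then have "\<not> x < real (Suc i) * \<delta>" using not_less_Least[of i "\<lambda>j. x < real (Suc j) * \<delta>"] j0_def by auto
    moreover have "x - real j0 * \<delta> \<noteq> 0" using hyp[of j0] j0N by (simp add: x_def)
    ultimately show ?thesis using Suc by auto
  qed
  define k where "k = N - 1 - j0"
  have kN: "k < N" using N0 by (simp add: k_def)
  have rk: "real N - real k - 1 = real j0" "real N - real k = real (Suc j0)"
    using j0N by (auto simp: k_def of_nat_diff)
  have P: "0 \<le> int k \<and> int k \<le> int N - 1 \<and> real_of_int (int N - int k - 1) * \<delta> < x \<and> x < real_of_int (int N - int k) * \<delta>"
    using kN j0a j0b rk by (auto simp: of_nat_diff)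
  have uniq: "k' = int k" if k': "0 \<le> k' \<and> k' \<le> int N - 1 \<and> real_of_int (int N - k' - 1) * \<delta> < x \<and> x < real_of_int (int N - k') * \<delta>" for k'
  proof (rule ccontr)
    assume ne: "k' \<noteq> int k"
    show False
    proof (cases "k' < int k")
      case True
      then have "real_of_int (int N - int k) \<le> real_of_int (int N - k' - 1)" by simp
      then have "real_of_int (int N - int k) * \<delta> \<le> real_of_int (int N - k' - 1) * \<delta>" using d by (rule mult_right_mono)
      then show False using k' P by linarith
    next
      case False
      then have "int k < k'" using ne by simp
      then have "real_of_int (int N - k') \<le> real_of_int (int N - int k - 1)" by simp
      then have "real_of_int (int N - k') * \<delta> \<le> real_of_int (int N - int k - 1) * \<delta>" using d by (rule mult_right_mono)
      then show False using k' P by linarith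
    qed
  qed
  have "k_index \<epsilon> \<delta> N \<nu> = int k"
    unfolding k_index_def using nA
    by (simp add: x_def[symmetric]) (rule the_equality, use P uniq in auto)
  then show ?thesis using kN rk j0a j0b by (intro exI[of _ k]) (auto simp: x_def)
qed

lemma Phi_A:
  assumes "real \<nu> * \<epsilon> + 2 > real (size S) * \<delta>"
  shows "Phi \<epsilon> \<delta> \<Lambda> S \<nu> (k_index \<epsilon> \<delta> (size S) \<nu>) a = \<Lambda> powr (real (size S) * \<delta> - (real \<nu> * \<epsilon> + 2))"
  using assms by (simp add: k_index_def Phi_def)

lemma Phi_B:
  "Phi \<epsilon> \<delta> \<Lambda> S \<nu> (int k) a = cluster_scale S k a powr ((real (size S) - real k) * \<delta> - (real \<nu> * \<epsilon> + 2))
      * (\<Prod>i<k. cluster_scale S i a powr \<delta>)"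
  by (simp add: Phi_def)

lemma Phi_B_exp:
  assumes "\<And>i. i \<le> k \<Longrightarrow> 0 < cluster_scale S i a"
  shows "Phi \<epsilon> \<delta> \<Lambda> S \<nu> (int k) a = exp (((real (size S) - real k) * \<delta> - (real \<nu> * \<epsilon> + 2)) * ln (cluster_scale S k a)
            + \<delta> * (\<Sum>i<k. ln (cluster_scale S i a)))"
proof -
  have "(\<Prod>i<k. cluster_scale S i a powr \<delta>) = (\<Prod>i<k. exp (\<delta> * ln (cluster_scale S i a)))"
  proof (intro prod.cong refl)
    fix i assume "i \<in> {..<k}"
    then have "0 < cluster_scale S i a" using assms by auto
    then show "cluster_scale S i a powr \<delta> = exp (\<delta> * ln (cluster_scale S i a))"
      by (simp add: powr_def mult.commute)
  qed
  also have "\<dots> = exp (\<Sum>i<k. \<delta> * ln (cluster_scale S i a))" by (simp add: exp_sum)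
  finally show ?thesis using assms[of k]
    by (simp add: Phi_B powr_def exp_add sum_distrib_left mult.commute)
qed

lemma Phi_B_zero:
  assumes "cluster_scale S k a = 0" "0 < (real (size S) - real k) * \<delta> - (real \<nu> * \<epsilon> + 2)"
  shows "Phi \<epsilon> \<delta> \<Lambda> S \<nu> (int k) a = 0"
  using assms by (simp add: Phi_B)

definition lwf :: "complex multiset \<Rightarrow> complex \<Rightarrow> real \<Rightarrow> real \<Rightarrow> real \<Rightarrow> real" where
  "lwf S a \<delta> x s = x * ln s - \<delta> * (\<Sum>i<size S. ln (max s (td S a i)))"

definition Ksum :: "real \<Rightarrow> real" where
  "Ksum \<eta> = 2 / (exp (- \<eta> * ln 2) * (1 - exp (- \<eta> * ln 2)))"

lemma Ksum_pos: "0 < \<eta> \<Longrightarrow> 0 < Ksum \<eta>"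
  unfolding Ksum_def by (intro divide_pos_pos mult_pos_pos) auto

lemma ennreal_suminf_le_bound:
  fixes f :: "nat \<Rightarrow> ennreal"
  shows "(\<And>n. (\<Sum>j<n. f j) \<le> x) \<Longrightarrow> suminf f \<le> x"
  using ennreal_suminf_bound_add[of f 0 x] by simp

lemma GENU:
  fixes d lK lP \<eta> c :: real and L :: "nat \<Rightarrow> real"
  assumes d: "0 \<le> d" and eta: "0 < \<eta>" and c: "0 \<le> c"
    and bnd: "\<And>j. L j \<le> lK - lP - \<eta> * \<bar>c - real j * ln 2\<bar>"
  shows "(\<Sum>j. ennreal (d * exp (L j))) \<le> ennreal (exp lK * Ksum \<eta> * d) / ennreal (exp lP)"
proof -
  have rhs: "ennreal (exp lK * Ksum \<eta> * d) / ennreal (exp lP) = ennreal (exp lK * Ksum \<eta> * d / exp lP)"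
    using d Ksum_pos[OF eta] by (intro divide_ennreal) auto
  show ?thesis unfolding rhs
  proof (rule ennreal_suminf_le_bound)
    fix n
    have "(\<Sum>j<n. ennreal (d * exp (L j))) = ennreal (\<Sum>j<n. d * exp (L j))"
      using d by (intro sum_ennreal) auto
    also have "\<dots> \<le> ennreal (exp lK * Ksum \<eta> * d / exp lP)"
    proof (rule ennreal_leI)
      have "(\<Sum>j<n. d * exp (L j)) \<le> (\<Sum>j<n. d * (exp lK / exp lP) * exp (- \<eta> * \<bar>c - real j * ln 2\<bar>))"
      proof (rule sum_mono)
        fix j
        have "exp (L j) \<le> exp (lK - lP - \<eta> * \<bar>c - real j * ln 2\<bar>)" using bnd[of j] by simp
        also have "\<dots> = (exp lK / exp lP) * exp (- \<eta> * \<bar>c - real j * ln 2\<bar>)"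
          by (simp add: exp_diff exp_minus exp_add field_simps)
        finally have "exp (L j) \<le> (exp lK / exp lP) * exp (- \<eta> * \<bar>c - real j * ln 2\<bar>)" .
        then have "d * exp (L j) \<le> d * ((exp lK / exp lP) * exp (- \<eta> * \<bar>c - real j * ln 2\<bar>))"
          using d by (rule mult_left_mono)
        then show "d * exp (L j) \<le> d * (exp lK / exp lP) * exp (- \<eta> * \<bar>c - real j * ln 2\<bar>)"
          by (simp only: mult.assoc)
      qed
      also have "\<dots> = d * (exp lK / exp lP) * (\<Sum>j<n. exp (- \<eta> * \<bar>c - real j * ln 2\<bar>))"
        by (simp add: sum_distrib_left)
      also have "\<dots> \<le> d * (exp lK / exp lP) * Ksum \<eta>"
        unfolding Ksum_def using d by (intro mult_left_mono sum_exp_dist eta c) auto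
      also have "\<dots> = exp lK * Ksum \<eta> * d / exp lP" by simp
      finally show "(\<Sum>j<n. d * exp (L j)) \<le> exp lK * Ksum \<eta> * d / exp lP" .
    qed
    finally show "(\<Sum>j<n. ennreal (d * exp (L j))) \<le> ennreal (exp lK * Ksum \<eta> * d / exp lP)" .
  qed
qed

locale rootctx =
  fixes S :: "complex multiset" and a :: complex and \<Lambda> \<epsilon> \<delta> \<eta> :: real and \<nu> M :: nat
  assumes aS: "a \<in># S" and N0: "0 < size S" and SB: "set_mset S \<subseteq> ball 0 (\<Lambda> / 2)"
    and L0: "0 < \<Lambda>" and d0: "0 \<le> \<delta>" and e0: "0 \<le> \<epsilon>" and eta0: "0 < \<eta>" and nuM: "\<nu> \<le> M"
    and H: "\<And>j. j \<le> size S \<Longrightarrow> \<eta> \<le> \<bar>real \<nu> * \<epsilon> + 2 - real j * \<delta>\<bar>"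
begin

abbreviation "N \<equiv> size S"
abbreviation "x \<equiv> real \<nu> * \<epsilon> + 2"
abbreviation "t \<equiv> td S a"
abbreviation "LL \<equiv> (\<lambda>i. cluster_scale S i a)"
abbreviation "PP \<equiv> Phi \<epsilon> \<delta> \<Lambda> S \<nu> (k_index \<epsilon> \<delta> (size S) \<nu>) a"

lemma x_le: "x \<le> real M * \<epsilon> + 2"
  using nuM e0 by (simp add: mult_right_mono)

lemma x_pos: "0 < x"
proof -
  have "0 \<le> real \<nu> * \<epsilon>" using e0 by simp
  then show ?thesis by simp
qed

lemma anti: "\<And>i j. i \<le> j \<Longrightarrow> j < N \<Longrightarrow> t j \<le> t i"
  by (rule td_antimono)

lemma tnn: "\<And>i. i < N \<Longrightarrow> 0 \<le> t i"
  by (rule td_nonneg)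

lemma tl: "\<And>i. i < N \<Longrightarrow> t i < \<Lambda>"
  using td_less[OF SB aS] by blast

lemma Lt: "\<And>i. i < N \<Longrightarrow> t i \<le> LL i \<and> LL i \<le> 2 * t i"
  using td_le_cs[OF aS] cs_le_td[OF aS] by blast

lemma hne: "\<And>j. j \<le> N \<Longrightarrow> x - real j * \<delta> \<noteq> 0"
  using H eta0 by force

lemma caseB:
  assumes "\<not> x > real N * \<delta>"
  obtains k where "k < N" "k_index \<epsilon> \<delta> N \<nu> = int k"
    "\<eta> \<le> x - (real N - real k - 1) * \<delta>" "\<eta> \<le> (real N - real k) * \<delta> - x"
proof -
  obtain k where k: "k < N" "k_index \<epsilon> \<delta> N \<nu> = int k" "(real N - real k - 1) * \<delta> < x" "x < (real N - real k) * \<delta>"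
    using k_index_B[OF d0 e0 assms hne] by blast
  have e1: "real (N - k - 1) = real N - real k - 1" using k(1) by (simp add: of_nat_diff)
  have "\<eta> \<le> \<bar>x - real (N - k - 1) * \<delta>\<bar>" by (rule H) simp
  then have "\<eta> \<le> \<bar>x - (real N - real k - 1) * \<delta>\<bar>" by (simp only: e1)
  moreover have "\<bar>x - (real N - real k - 1) * \<delta>\<bar> = x - (real N - real k - 1) * \<delta>" using k(3) by simp
  ultimately have h1: "\<eta> \<le> x - (real N - real k - 1) * \<delta>" by linarith
  have e2: "real (N - k) = real N - real k" using k(1) by (simp add: of_nat_diff)
  have "\<eta> \<le> \<bar>x - real (N - k) * \<delta>\<bar>" by (rule H) simp
  then have "\<eta> \<le> \<bar>x - (real N - real k) * \<delta>\<bar>" by (simp only: e2)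
  moreover have "\<bar>x - (real N - real k) * \<delta>\<bar> = (real N - real k) * \<delta> - x" using k(4) by simp
  ultimately have h2: "\<eta> \<le> (real N - real k) * \<delta> - x" by linarith
  show ?thesis using k h1 h2 that by blast
qed

lemma UPB:
  assumes d: "0 \<le> d"
  shows "(\<Sum>j. ennreal (d * exp (lwf S a \<delta> x (2 * \<Lambda> / 2 ^ j))))
         \<le> ennreal (2 powr (real M * \<epsilon> + 2 + real N * \<delta>) * Ksum \<eta> * d) / ennreal PP"
proof -
  define lK where "lK = (real M * \<epsilon> + 2 + real N * \<delta>) * ln 2"
  have elK: "exp lK = 2 powr (real M * \<epsilon> + 2 + real N * \<delta>)" by (simp add: lK_def powr_def)
  have sj: "\<And>j. 0 < 2 * \<Lambda> / 2 ^ j" using L0 by simp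
  have lsj: "\<And>j. ln (2 * \<Lambda> / 2 ^ j) = ln (2 * \<Lambda>) - real j * ln 2"
    using L0 by (simp add: ln_div ln_realpow)
  show ?thesis
  proof (cases "x > real N * \<delta>")
    case True
    define lP where "lP = (real N * \<delta> - x) * ln \<Lambda>"
    have PP: "PP = exp lP" using Phi_A[OF True] L0 by (simp add: lP_def powr_def mult.commute)
    have "(\<Sum>j. ennreal (d * exp (lwf S a \<delta> x (2 * \<Lambda> / 2 ^ j)))) \<le> ennreal (exp lK * Ksum \<eta> * d) / ennreal (exp lP)"
    proof (rule GENU[OF d eta0, of 0])
      fix j
      have s2: "2 * \<Lambda> / 2 ^ j \<le> 2 * \<Lambda>" using L0 by (simp add: field_simps)
      have "lwf S a \<delta> x (2 * \<Lambda> / 2 ^ j) + lP \<le> x * ln 2 - \<eta> * \<bar>ln (2 * \<Lambda> / 2 ^ j) - ln (2 * \<Lambda>)\<bar>"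
        unfolding lwf_def lP_def
        by (rule log1d_upper_A[OF sj s2 eta0 _ d0 _ tnn]) (use True H[of N] e0 in auto)
      moreover have "x * ln 2 \<le> (real M * \<epsilon> + 2 + real N * \<delta>) * ln 2"
      proof (intro mult_right_mono)
        have "0 \<le> real N * \<delta>" using d0 by simp
        then show "x \<le> real M * \<epsilon> + 2 + real N * \<delta>" using x_le by linarith
      qed simp
      moreover have "\<eta> * \<bar>ln (2 * \<Lambda> / 2 ^ j) - ln (2 * \<Lambda>)\<bar> = \<eta> * \<bar>0 - real j * ln 2\<bar>"
        by (simp add: lsj)
      ultimately show "lwf S a \<delta> x (2 * \<Lambda> / 2 ^ j) \<le> lK - lP - \<eta> * \<bar>0 - real j * ln 2\<bar>"
        unfolding lK_def by linarith
    qed simp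
    then show ?thesis unfolding PP elK .
  next
    case False
    then obtain k where k: "k < N" "k_index \<epsilon> \<delta> N \<nu> = int k"
      "\<eta> \<le> x - (real N - real k - 1) * \<delta>" "\<eta> \<le> (real N - real k) * \<delta> - x"
      by (rule caseB)
    show ?thesis
    proof (cases "t k = 0")
      case True
      then have "LL k = 0" using Lt[OF k(1)] by simp
      then have PP0: "PP = 0" using k eta0 by (simp add: Phi_B_zero)
      show ?thesis
      proof (cases "d = 0")
        case True then show ?thesis by simp
      next
        case False
        have "0 < 2 powr (real M * \<epsilon> + 2 + real N * \<delta>) * Ksum \<eta> * d"
          using False d Ksum_pos[OF eta0] by simp
        then have "ennreal (2 powr (real M * \<epsilon> + 2 + real N * \<delta>) * Ksum \<eta> * d) \<noteq> 0"
          by (metis ennreal_eq_0_iff not_le)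
        then have "ennreal (2 powr (real M * \<epsilon> + 2 + real N * \<delta>) * Ksum \<eta> * d) / ennreal PP = top"
          using PP0 by simp
        then show ?thesis by simp
      qed
    next
      case False
      then have tk: "0 < t k" using tnn[OF k(1)] by simp
      have Lpos: "\<And>i. i \<le> k \<Longrightarrow> 0 < LL i"
        using anti[of _ k] Lt k(1) tk by (meson le_less_trans less_le_trans order.strict_trans2)
      define lP where "lP = ((real N - real k) * \<delta> - x) * ln (LL k) + \<delta> * (\<Sum>i<k. ln (LL i))"
      have PP: "PP = exp lP" unfolding k(2) lP_def by (rule Phi_B_exp) (rule Lpos)
      define c where "c = ln (2 * \<Lambda>) - ln (t k)"
      have c: "0 \<le> c" using tk tl[OF k(1)] L0 by (simp add: c_def)
      have "(\<Sum>j. ennreal (d * exp (lwf S a \<delta> x (2 * \<Lambda> / 2 ^ j)))) \<le> ennreal (exp lK * Ksum \<eta> * d) / ennreal (exp lP)"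
      proof (rule GENU[OF d eta0 c])
        fix j
        have "lwf S a \<delta> x (2 * \<Lambda> / 2 ^ j) + lP \<le> real N * \<delta> * ln 2 - \<eta> * \<bar>ln (2 * \<Lambda> / 2 ^ j) - ln (t k)\<bar>"
          unfolding lwf_def lP_def
          by (rule log1d_upper_B[where t = "td S a" and N = "size S" and k = k and L = "\<lambda>i. cluster_scale S i a", OF k(1) sj eta0 _ _ d0 _ anti tk Lt]) (use k e0 in auto)
        moreover have "real N * \<delta> * ln 2 \<le> (real M * \<epsilon> + 2 + real N * \<delta>) * ln 2"
          using e0 by (intro mult_right_mono) auto
        moreover have "\<eta> * \<bar>ln (2 * \<Lambda> / 2 ^ j) - ln (t k)\<bar> = \<eta> * \<bar>c - real j * ln 2\<bar>"
        proof -
          have "ln (2 * \<Lambda> / 2 ^ j) - ln (t k) = c - real j * ln 2" by (simp add: lsj c_def)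
          then show ?thesis by simp
        qed
        ultimately show "lwf S a \<delta> x (2 * \<Lambda> / 2 ^ j) \<le> lK - lP - \<eta> * \<bar>c - real j * ln 2\<bar>"
          unfolding lK_def by linarith
      qed
      then show ?thesis unfolding PP elK .
    qed
  qed
qed

lemma LPB:
  assumes d: "0 < d"
    and low: "\<And>s. 0 < s \<Longrightarrow> s \<le> \<Lambda> / 4 \<Longrightarrow> ennreal (d * exp (lwf S a \<delta> x s)) \<le> I"
  shows "ennreal (4 powr (- (real M * \<epsilon> + 2)) * d) / ennreal PP \<le> I"
proof -
  define c4 where "c4 = 4 powr (- (real M * \<epsilon> + 2))"
  have c4: "0 < c4" by (simp add: c4_def)
  have c4le: "c4 \<le> exp (- (x * ln 4))"
  proof -
    have "c4 = exp (- ((real M * \<epsilon> + 2) * ln 4))" by (simp add: c4_def powr_def algebra_simps)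
    moreover have "x * ln 4 \<le> (real M * \<epsilon> + 2) * ln 4" using x_le by (intro mult_right_mono) auto
    ultimately show ?thesis by simp
  qed
  have gen: "ennreal (c4 * d) / ennreal (exp lP) \<le> I" if s: "0 < s" "s \<le> \<Lambda> / 4"
    and lo: "- (x * ln 4) \<le> lwf S a \<delta> x s + lP" for s lP
  proof -
    have "ennreal (c4 * d) / ennreal (exp lP) = ennreal (c4 * d / exp lP)"
      using c4 d by (intro divide_ennreal) auto
    also have "\<dots> \<le> ennreal (d * exp (lwf S a \<delta> x s))"
    proof (rule ennreal_leI)
      have "c4 \<le> exp (lwf S a \<delta> x s + lP)" using c4le lo by (meson exp_le_cancel_iff order.trans)
      then have "c4 / exp lP \<le> exp (lwf S a \<delta> x s)" by (simp add: exp_add divide_le_eq)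
      then have "d * (c4 / exp lP) \<le> d * exp (lwf S a \<delta> x s)" using d by (intro mult_left_mono) auto
      then show "c4 * d / exp lP \<le> d * exp (lwf S a \<delta> x s)" by (simp add: field_simps)
    qed
    also have "\<dots> \<le> I" by (rule low[OF s])
    finally show ?thesis .
  qed
  show ?thesis unfolding c4_def[symmetric]
  proof (cases "x > real N * \<delta>")
    case True
    define lP where "lP = (real N * \<delta> - x) * ln \<Lambda>"
    have PP: "PP = exp lP" using Phi_A[OF True] L0 by (simp add: lP_def powr_def mult.commute)
    have "- (x * ln 4) \<le> lwf S a \<delta> x (\<Lambda> / 4) + lP"
      unfolding lwf_def lP_def using log1d_lower_A[OF L0 d0 tl, where a = "real \<nu> * \<epsilon>"] by simp
    then show "ennreal (c4 * d) / ennreal PP \<le> I" unfolding PP by (intro gen) (use L0 in auto)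
  next
    case False
    then obtain k where k: "k < N" "k_index \<epsilon> \<delta> N \<nu> = int k"
      "\<eta> \<le> x - (real N - real k - 1) * \<delta>" "\<eta> \<le> (real N - real k) * \<delta> - x"
      by (rule caseB)
    show "ennreal (c4 * d) / ennreal PP \<le> I"
    proof (cases "t k = 0")
      case False
      then have tk: "0 < t k" using tnn[OF k(1)] by simp
      have Lpos: "\<And>i. i \<le> k \<Longrightarrow> 0 < LL i"
        using anti[of _ k] Lt k(1) tk by (meson le_less_trans less_le_trans order.strict_trans2)
      define lP where "lP = ((real N - real k) * \<delta> - x) * ln (LL k) + \<delta> * (\<Sum>i<k. ln (LL i))"
      have PP: "PP = exp lP" unfolding k(2) lP_def by (rule Phi_B_exp) (rule Lpos)
      have "- (x * ln 4) \<le> lwf S a \<delta> x (t k / 4) + lP"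
        unfolding lwf_def lP_def
        by (rule log1d_lower_B[where a = "real \<nu> * \<epsilon>" and t = "td S a" and N = "size S" and k = k and L = "\<lambda>i. cluster_scale S i a", OF k(1) _ d0 anti tk])
          (use k eta0 Lt in auto)
      moreover have "t k / 4 \<le> \<Lambda> / 4" using tl[OF k(1)] by simp
      ultimately show ?thesis unfolding PP using tk by (intro gen) auto
    next
      case True
      then have "LL k = 0" using Lt[OF k(1)] by simp
      then have PP0: "PP = 0" using k eta0 by (simp add: Phi_B_zero)
      have "I = top"
      proof (rule ccontr)
        assume "I \<noteq> top"
        then obtain i where i: "I = ennreal i" "0 \<le> i" by (cases I rule: ennreal_cases) auto
        obtain s where s: "0 < s" "s \<le> \<Lambda> / 4" "ln ((i + 1) / d) \<le> lwf S a \<delta> x s"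
          using log1d_lower_B0[where t = "td S a" and N = "size S" and k = k, OF k(1) eta0 _ d0 L0 anti tnn True tl, of "real \<nu> * \<epsilon>" "ln ((i + 1) / d)"] k(4)
          unfolding lwf_def by auto
        have "(i + 1) / d \<le> exp (lwf S a \<delta> x s)"
          using s(3) i d by (metis exp_le_cancel_iff exp_ln divide_pos_pos add_nonneg_pos zero_less_one)
        then have "i + 1 \<le> d * exp (lwf S a \<delta> x s)" using d by (simp add: field_simps)
        then have "ennreal (i + 1) \<le> I" using low[OF s(1,2)] by (meson ennreal_leI order.trans)
        then show False using i by simp
      qed
      then show ?thesis by simp
    qed
  qed
qed

end

lemma pderiv_vanish:
  fixes P :: "'a::{idom,semiring_char_0} poly"
  assumes "degree P < \<nu>"
  shows "(pderiv ^^ \<nu>) P = 0"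
proof (rule poly_eqI)
  fix n
  show "coeff ((pderiv ^^ \<nu>) P) n = coeff 0 n"
    using assms by (simp add: coeff_higher_pderiv coeff_eq_0)
qed

definition Kt :: "complex poly \<Rightarrow> complex multiset \<Rightarrow> complex \<Rightarrow> real \<Rightarrow> real \<Rightarrow> nat \<Rightarrow> nat \<Rightarrow> real \<Rightarrow> real" where
  "Kt P S a \<epsilon> \<delta> M \<nu> s = (real M + 1) powr \<epsilon> * (4 ^ size S) powr \<delta>
      * (cmod (poly ((pderiv ^^ \<nu>) P) a) / fact \<nu>) powr \<epsilon> * (s powr (real \<nu> * \<epsilon>) / gq S a s powr \<delta>)"

lemma Kt_nonneg: "0 \<le> Kt P S a \<epsilon> \<delta> M \<nu> s"
  unfolding Kt_def by simp

lemma nearest_root: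
  assumes "S \<noteq> {#}"
  obtains a where "a \<in># S" "\<And>b. b \<in># S \<Longrightarrow> cmod (z - a) \<le> cmod (z - b)"
proof -
  have fin: "finite ((\<lambda>b. cmod (z - b)) ` set_mset S)" by simp
  have ne: "(\<lambda>b. cmod (z - b)) ` set_mset S \<noteq> {}" using assms by simp
  obtain a where a: "a \<in># S" "cmod (z - a) = Min ((\<lambda>b. cmod (z - b)) ` set_mset S)"
    using Min_in[OF fin ne] by auto
  show ?thesis
  proof (rule that[OF a(1)])
    fix b assume "b \<in># S"
    then show "cmod (z - a) \<le> cmod (z - b)" unfolding a(2) by (intro Min_le) auto
  qed
qed

lemma pointwise_upper:
  fixes P Q :: "complex poly" and \<epsilon> \<delta> \<Lambda> :: real and z :: complex
  assumes P: "P \<noteq> 0" "degree P = M" and Q: "lead_coeff Q = 1" "0 < degree Q"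
    and L: "0 < \<Lambda>" and SB: "set_mset (proots Q) \<subseteq> ball 0 (\<Lambda> / 2)"
    and e: "0 \<le> \<epsilon>" and d: "0 \<le> \<delta>" and z: "z \<in> ball 0 \<Lambda>" and Qz: "poly Q z \<noteq> 0"
  shows "\<exists>a\<in>#proots Q. \<exists>j. z \<in> ann a (2 * \<Lambda>) j \<and>
           cmod (poly P z) powr \<epsilon> / cmod (poly Q z) powr \<delta> \<le> (\<Sum>\<nu>\<le>M. Kt P (proots Q) a \<epsilon> \<delta> M \<nu> (2 * \<Lambda> / 2 ^ j))"
proof -
  define S where "S = proots Q"
  have Q0: "Q \<noteq> 0" using Q by auto
  have szS: "size S = degree Q" by (simp add: S_def size_proots_complex)
  then have "S \<noteq> {#}" using Q by auto
  then obtain a where a: "a \<in># S" "\<And>b. b \<in># S \<Longrightarrow> cmod (z - a) \<le> cmod (z - b)"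
    using nearest_root[of S z] by blast
  define r where "r = cmod (z - a)"
  have "poly Q a = 0" using a(1) Q0 by (simp add: S_def)
  then have "z \<noteq> a" using Qz by auto
  then have r0: "0 < r" by (simp add: r_def)
  have "cmod a < \<Lambda> / 2" using a(1) SB by (auto simp: S_def)
  moreover have "cmod z < \<Lambda>" using z by simp
  moreover have "r \<le> cmod z + cmod a" unfolding r_def by (rule norm_triangle_ineq4)
  ultimately have r2: "r \<le> 2 * \<Lambda>" using L by linarith
  obtain j where j: "2 * \<Lambda> / 2 ^ Suc j < r" "r \<le> 2 * \<Lambda> / 2 ^ j" using ann_exists[OF r0 r2] by blast
  define s where "s = 2 * \<Lambda> / 2 ^ j"
  have s0: "0 < s" using L by (simp add: s_def)
  have s2r: "s \<le> 2 * r" using j(1) by (simp add: s_def field_simps)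
  have rs: "r \<le> s" using j(2) by (simp add: s_def)
  have zann: "z \<in> ann a (2 * \<Lambda>) j" using j by (simp add: ann_mem r_def)
  define dd where "dd = (\<lambda>\<nu>. cmod (poly ((pderiv ^^ \<nu>) P) a) / fact \<nu>)"
  have dd0: "\<And>\<nu>. 0 \<le> dd \<nu>" by (simp add: dd_def)
  have "cmod (poly P z) \<le> (\<Sum>\<nu>\<le>M. dd \<nu> * r ^ \<nu>)"
    using taylor_bound[of P z a] P by (simp add: dd_def r_def)
  also have "\<dots> \<le> (\<Sum>\<nu>\<le>M. dd \<nu> * s ^ \<nu>)"
    by (intro sum_mono mult_left_mono power_mono) (use r0 rs dd0 in auto)
  finally have Pz: "cmod (poly P z) \<le> (\<Sum>\<nu>\<le>M. dd \<nu> * s ^ \<nu>)" .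
  have "cmod (poly P z) powr \<epsilon> \<le> (\<Sum>\<nu>\<le>M. dd \<nu> * s ^ \<nu>) powr \<epsilon>"
    by (rule powr_mono2[OF e _ Pz]) simp
  also have "\<dots> \<le> (real M + 1) powr \<epsilon> * (\<Sum>\<nu>\<le>M. (dd \<nu> * s ^ \<nu>) powr \<epsilon>)"
    by (rule powr_sum_le) (use dd0 s0 e in auto)
  also have "(\<Sum>\<nu>\<le>M. (dd \<nu> * s ^ \<nu>) powr \<epsilon>) = (\<Sum>\<nu>\<le>M. dd \<nu> powr \<epsilon> * s powr (real \<nu> * \<epsilon>))"
  proof (rule sum.cong[OF refl])
    fix \<nu>
    have "(s ^ \<nu>) powr \<epsilon> = s powr (real \<nu> * \<epsilon>)"
      using s0 by (simp add: powr_realpow[symmetric] powr_powr)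
    then show "(dd \<nu> * s ^ \<nu>) powr \<epsilon> = dd \<nu> powr \<epsilon> * s powr (real \<nu> * \<epsilon>)"
      using dd0 s0 by (simp add: powr_mult)
  qed
  finally have num: "cmod (poly P z) powr \<epsilon> \<le> (real M + 1) powr \<epsilon> * (\<Sum>\<nu>\<le>M. dd \<nu> powr \<epsilon> * s powr (real \<nu> * \<epsilon>))" .
  have Qprod: "cmod (poly Q z) = (\<Prod>b\<in>#S. cmod (z - b))"
    using cmod_poly_proots[of Q z] Q by (simp add: S_def)
  have h1: "gq S a r \<le> 2 ^ size S * (\<Prod>b\<in>#S. cmod (z - b))"
    unfolding r_def by (rule Q_lower_gq) (use a in auto)
  have h2: "gq S a s \<le> 2 ^ size S * gq S a r"
  proof -
    have "gq S a s \<le> gq S a (2 * r)" by (rule gq_mono) (use s0 s2r in auto)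
    also have "\<dots> \<le> 2 ^ size S * gq S a r" by (rule gq_double) (use r0 in auto)
    finally show ?thesis .
  qed
  have "2 ^ size S * gq S a r \<le> 2 ^ size S * (2 ^ size S * (\<Prod>b\<in>#S. cmod (z - b)))"
    using h1 by (intro mult_left_mono) auto
  also have "\<dots> = ((2::real) ^ size S * 2 ^ size S) * (\<Prod>b\<in>#S. cmod (z - b))" by (simp only: mult.assoc)
  also have "(2::real) ^ size S * 2 ^ size S = 4 ^ size S" by (simp flip: power_mult_distrib)
  finally have "gq S a s \<le> 4 ^ size S * cmod (poly Q z)"
    using h2 unfolding Qprod by linarith
  then have gQ: "gq S a s / 4 ^ size S \<le> cmod (poly Q z)" by (simp add: field_simps)
  have gpos: "0 < gq S a s" using gq_pos[OF s0] .
  have Qpos: "0 < cmod (poly Q z)" using Qz by simp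
  have "(gq S a s / 4 ^ size S) powr \<delta> \<le> cmod (poly Q z) powr \<delta>"
    by (rule powr_mono2[OF d _ gQ]) (use gpos in simp)
  then have den: "gq S a s powr \<delta> / (4 ^ size S) powr \<delta> \<le> cmod (poly Q z) powr \<delta>"
    using gpos by (simp add: powr_divide)
  have dpos: "0 < gq S a s powr \<delta> / (4 ^ size S) powr \<delta>" using gpos by simp
  have "cmod (poly P z) powr \<epsilon> / cmod (poly Q z) powr \<delta>
        \<le> ((real M + 1) powr \<epsilon> * (\<Sum>\<nu>\<le>M. dd \<nu> powr \<epsilon> * s powr (real \<nu> * \<epsilon>))) / (gq S a s powr \<delta> / (4 ^ size S) powr \<delta>)"
    by (rule frac_le[OF _ num dpos den]) (intro mult_nonneg_nonneg sum_nonneg; simp)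
  also have "\<dots> = (\<Sum>\<nu>\<le>M. Kt P S a \<epsilon> \<delta> M \<nu> s)"
    by (simp add: Kt_def dd_def sum_distrib_left sum_divide_distrib field_simps)
  finally show ?thesis using a(1) zann unfolding s_def S_def by blast
qed

lemma integral_upper:
  fixes P Q :: "complex poly" and \<epsilon> \<delta> \<Lambda> :: real
  assumes P: "P \<noteq> 0" "degree P = M" and Q: "lead_coeff Q = 1" "0 < degree Q"
    and L: "0 < \<Lambda>" and SB: "set_mset (proots Q) \<subseteq> ball 0 (\<Lambda> / 2)"
    and e: "0 \<le> \<epsilon>" and d: "0 \<le> \<delta>"
  shows "set_nn_integral lborel (ball 0 \<Lambda>) (\<lambda>z. ennreal (cmod (poly P z) powr \<epsilon> / cmod (poly Q z) powr \<delta>))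
       \<le> (\<Sum>a\<in>set_mset (proots Q). \<Sum>\<nu>\<le>M. \<Sum>j. ennreal (Kt P (proots Q) a \<epsilon> \<delta> M \<nu> (2 * \<Lambda> / 2 ^ j) * (pi * (2 * \<Lambda> / 2 ^ j) ^ 2)))"
proof -
  define S where "S = proots Q"
  define f where "f = (\<lambda>a \<nu> j z. ennreal (Kt P S a \<epsilon> \<delta> M \<nu> (2 * \<Lambda> / 2 ^ j)) * indicator (ann a (2 * \<Lambda>) j) z)"
  have meas: "\<And>a \<nu> j. f a \<nu> j \<in> borel_measurable lborel"
    unfolding f_def by (intro borel_measurable_times_ennreal borel_measurable_const borel_measurable_indicator ann_sets)
  have meas2: "\<And>a \<nu>. (\<lambda>z. \<Sum>j. f a \<nu> j z) \<in> borel_measurable lborel"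
    by (rule borel_measurable_suminf_order) (rule meas)
  have meas3: "\<And>a. (\<lambda>z. \<Sum>\<nu>\<le>M. \<Sum>j. f a \<nu> j z) \<in> borel_measurable lborel"
    by (rule borel_measurable_sum) (rule meas2)
  have pw: "ennreal (cmod (poly P z) powr \<epsilon> / cmod (poly Q z) powr \<delta>) * indicator (ball 0 \<Lambda>) z
            \<le> (\<Sum>a\<in>set_mset S. \<Sum>\<nu>\<le>M. \<Sum>j. f a \<nu> j z)" for z
  proof (cases "z \<in> ball 0 \<Lambda> \<and> poly Q z \<noteq> 0")
    case True
    then obtain a j0 where a: "a \<in># S" "z \<in> ann a (2 * \<Lambda>) j0"
      "cmod (poly P z) powr \<epsilon> / cmod (poly Q z) powr \<delta> \<le> (\<Sum>\<nu>\<le>M. Kt P S a \<epsilon> \<delta> M \<nu> (2 * \<Lambda> / 2 ^ j0))"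
      using pointwise_upper[OF P Q L SB e d] unfolding S_def by blast
    have "ennreal (cmod (poly P z) powr \<epsilon> / cmod (poly Q z) powr \<delta>) * indicator (ball 0 \<Lambda>) z
          = ennreal (cmod (poly P z) powr \<epsilon> / cmod (poly Q z) powr \<delta>)" using True by simp
    also have "\<dots> \<le> ennreal (\<Sum>\<nu>\<le>M. Kt P S a \<epsilon> \<delta> M \<nu> (2 * \<Lambda> / 2 ^ j0))"
      by (rule ennreal_leI[OF a(3)])
    also have "\<dots> = (\<Sum>\<nu>\<le>M. ennreal (Kt P S a \<epsilon> \<delta> M \<nu> (2 * \<Lambda> / 2 ^ j0)))"
      by (rule sum_ennreal[symmetric]) (rule Kt_nonneg)
    also have "\<dots> = (\<Sum>\<nu>\<le>M. f a \<nu> j0 z)" using a(2) by (simp add: f_def)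
    also have "\<dots> \<le> (\<Sum>\<nu>\<le>M. \<Sum>j. f a \<nu> j z)"
    proof (rule sum_mono)
      fix \<nu>
      have "(\<Sum>j\<in>{j0}. f a \<nu> j z) \<le> (\<Sum>j. f a \<nu> j z)"
        by (rule sum_le_suminf) auto
      then show "f a \<nu> j0 z \<le> (\<Sum>j. f a \<nu> j z)" by simp
    qed
    also have "\<dots> \<le> (\<Sum>a\<in>set_mset S. \<Sum>\<nu>\<le>M. \<Sum>j. f a \<nu> j z)"
      by (rule member_le_sum[where f = "\<lambda>a. \<Sum>\<nu>\<le>M. \<Sum>j. f a \<nu> j z"]) (use a(1) in auto)
    finally show ?thesis .
  next
    case False
    have z0: "ennreal (cmod (poly P z) powr \<epsilon> / cmod (poly Q z) powr \<delta>) * indicator (ball 0 \<Lambda>) z = 0"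
    proof (cases "z \<in> ball 0 \<Lambda>")
      case True
      then have "poly Q z = 0" using False by blast
      then show ?thesis by simp
    next
      case False
      then show ?thesis by simp
    qed
    show ?thesis unfolding z0 by (rule zero_le)
  qed
  have "set_nn_integral lborel (ball 0 \<Lambda>) (\<lambda>z. ennreal (cmod (poly P z) powr \<epsilon> / cmod (poly Q z) powr \<delta>))
      \<le> (\<integral>\<^sup>+ z. (\<Sum>a\<in>set_mset S. \<Sum>\<nu>\<le>M. \<Sum>j. f a \<nu> j z) \<partial>lborel)"
    by (rule nn_integral_mono) (rule pw)
  also have "\<dots> = (\<Sum>a\<in>set_mset S. \<integral>\<^sup>+ z. (\<Sum>\<nu>\<le>M. \<Sum>j. f a \<nu> j z) \<partial>lborel)"
    by (rule nn_integral_sum) (rule meas3)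
  also have "\<dots> = (\<Sum>a\<in>set_mset S. \<Sum>\<nu>\<le>M. \<integral>\<^sup>+ z. (\<Sum>j. f a \<nu> j z) \<partial>lborel)"
    by (intro sum.cong refl nn_integral_sum meas2)
  also have "\<dots> = (\<Sum>a\<in>set_mset S. \<Sum>\<nu>\<le>M. \<Sum>j. \<integral>\<^sup>+ z. f a \<nu> j z \<partial>lborel)"
    by (intro sum.cong refl nn_integral_suminf meas)
  also have "\<dots> \<le> (\<Sum>a\<in>set_mset S. \<Sum>\<nu>\<le>M. \<Sum>j. ennreal (Kt P S a \<epsilon> \<delta> M \<nu> (2 * \<Lambda> / 2 ^ j) * (pi * (2 * \<Lambda> / 2 ^ j) ^ 2)))"
  proof (intro sum_mono suminf_le)
    fix a \<nu> j
    have "(\<integral>\<^sup>+ z. f a \<nu> j z \<partial>lborel) = ennreal (Kt P S a \<epsilon> \<delta> M \<nu> (2 * \<Lambda> / 2 ^ j)) * emeasure lborel (ann a (2 * \<Lambda>) j)"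
      unfolding f_def by (rule nn_integral_cmult_indicator) (rule ann_sets)
    also have "\<dots> \<le> ennreal (Kt P S a \<epsilon> \<delta> M \<nu> (2 * \<Lambda> / 2 ^ j)) * ennreal (pi * (2 * \<Lambda> / 2 ^ j) ^ 2)"
      by (intro mult_left_mono ann_measure) (use L in auto)
    also have "\<dots> = ennreal (Kt P S a \<epsilon> \<delta> M \<nu> (2 * \<Lambda> / 2 ^ j) * (pi * (2 * \<Lambda> / 2 ^ j) ^ 2))"
      by (rule ennreal_mult[symmetric]) (auto intro: Kt_nonneg)
    finally show "(\<integral>\<^sup>+ z. f a \<nu> j z \<partial>lborel) \<le> ennreal (Kt P S a \<epsilon> \<delta> M \<nu> (2 * \<Lambda> / 2 ^ j) * (pi * (2 * \<Lambda> / 2 ^ j) ^ 2))" .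
  qed auto
  finally show ?thesis unfolding S_def .
qed

definition etag :: "nat \<Rightarrow> nat \<Rightarrow> real" where
  "etag M N = 1 / sqrt (2 * real (M + N))"

definition c1c :: "real \<Rightarrow> real \<Rightarrow> nat \<Rightarrow> nat \<Rightarrow> real" where
  "c1c \<epsilon> \<delta> M N = ((etag M N / 3) ^ M / fact M) powr \<epsilon> / (2 ^ N) powr \<delta> * pi / 2"

lemma c1c_pos: "0 < N \<Longrightarrow> 0 < c1c \<epsilon> \<delta> M N"
proof -
  assume "0 < N"
  then have "0 < etag M N" unfolding etag_def by simp
  then show ?thesis unfolding c1c_def by simp
qed

lemma integral_lower:
  fixes P Q :: "complex poly" and \<epsilon> \<delta> \<Lambda> s :: real and a :: complex
  assumes P: "P \<noteq> 0" "degree P = M" and Q: "lead_coeff Q = 1" "degree Q = N" "0 < N"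
    and L: "0 < \<Lambda>" and SB: "set_mset (proots Q) \<subseteq> ball 0 (\<Lambda> / 2)"
    and e: "0 \<le> \<epsilon>" and d: "0 \<le> \<delta>" and a: "a \<in># proots Q" and nu: "\<nu> \<le> M"
    and s: "0 < s" "s \<le> \<Lambda> / 4"
  shows "ennreal (c1c \<epsilon> \<delta> M N * cmod (poly ((pderiv ^^ \<nu>) P) a) powr \<epsilon>
                  * exp (lwf (proots Q) a \<delta> (real \<nu> * \<epsilon> + 2) s))
         \<le> set_nn_integral lborel (ball 0 \<Lambda>) (\<lambda>z. ennreal (cmod (poly P z) powr \<epsilon> / cmod (poly Q z) powr \<delta>))"
proof -
  define S where "S = proots Q"
  have Q0: "Q \<noteq> 0" using Q by auto
  have szS: "size S = N" by (simp add: S_def size_proots_complex Q)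
  define \<eta> where "\<eta> = etag M N"
  have eta: "0 < \<eta>" "\<eta> \<le> 1" using Q(3) by (auto simp: \<eta>_def etag_def)
  have eta2: "\<eta> ^ 2 = 1 / (2 * real (M + N))" using Q(3) by (simp add: \<eta>_def etag_def power_divide)
  define W where "W = {w. poly P w = 0} \<union> {w. poly Q w = 0}"
  have W: "finite W" using P Q0 by (simp add: W_def poly_roots_finite)
  have "card W \<le> card {w. poly P w = 0} + card {w. poly Q w = 0}" unfolding W_def by (rule card_Un_le)
  also have "\<dots> \<le> M + N" using card_poly_roots_bound[OF P(1)] card_poly_roots_bound[OF Q0] P Q by simp
  finally have cW: "real (card W) \<le> real (M + N)" by linarith
  have cw: "real (card W) * \<eta> ^ 2 \<le> 1 / 2"
  proof -
    have "real (card W) * \<eta> ^ 2 \<le> real (M + N) * \<eta> ^ 2" using cW by (intro mult_right_mono) auto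
    also have "\<dots> = 1 / 2" using Q(3) by (simp add: eta2)
    finally show ?thesis .
  qed
  have aL: "cmod a < \<Lambda> / 2" using a SB by auto
  have sub: "ball a s \<subseteq> ball 0 \<Lambda>"
  proof
    fix z assume "z \<in> ball a s"
    then have "cmod (z - a) < s" by (simp add: dist_norm norm_minus_commute)
    moreover have "cmod z \<le> cmod (z - a) + cmod a" using norm_triangle_ineq[of "z - a" a] by simp
    ultimately show "z \<in> ball 0 \<Lambda>" using aL s by simp
  qed
  define dn where "dn = cmod (poly ((pderiv ^^ \<nu>) P) a)"
  define g where "g = gq S a s"
  have gpos: "0 < g" unfolding g_def by (rule gq_pos[OF s(1)])
  define v where "v = ((\<eta> / 3) ^ M * (dn / fact \<nu> * s ^ \<nu>)) powr \<epsilon> / (2 ^ N * g) powr \<delta>"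
  have v0: "0 \<le> v" by (simp add: v_def)
  have bnd: "v \<le> cmod (poly P z) powr \<epsilon> / cmod (poly Q z) powr \<delta>"
    if z: "z \<in> ball a s" and far: "\<And>w. w \<in> W \<Longrightarrow> \<eta> * s \<le> dist w z" for z
  proof -
    have zs: "cmod (z - a) \<le> s" using z by (simp add: dist_norm norm_minus_commute)
    have farP: "\<And>w. poly P w = 0 \<Longrightarrow> \<eta> * s \<le> cmod (z - w)"
      using far by (auto simp: W_def dist_norm norm_minus_commute)
    have "(\<eta> / 3) ^ degree P * (cmod (lead_coeff P) * (\<Prod>w\<in>#proots P. s + cmod (a - w))) \<le> cmod (poly P z)"
      by (rule poly_lower_good[OF eta s(1) zs farP P(1)])
    moreover have "dn / fact \<nu> * s ^ \<nu> \<le> cmod (lead_coeff P) * (\<Prod>w\<in>#proots P. s + cmod (a - w))"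
      unfolding dn_def by (rule cauchy_poly_bound[OF s(1) P(1)])
    then have "(\<eta> / 3) ^ M * (dn / fact \<nu> * s ^ \<nu>) \<le> (\<eta> / 3) ^ M * (cmod (lead_coeff P) * (\<Prod>w\<in>#proots P. s + cmod (a - w)))"
      by (rule mult_left_mono) (use eta in simp)
    ultimately have Pz: "(\<eta> / 3) ^ M * (dn / fact \<nu> * s ^ \<nu>) \<le> cmod (poly P z)"
      using P(2) by simp
    have Qz0: "poly Q z \<noteq> 0"
    proof
      assume "poly Q z = 0"
      then have "z \<in> W" by (simp add: W_def)
      then have "\<eta> * s \<le> dist z z" using far by blast
      then have "\<eta> * s \<le> 0" by simp
      moreover have "0 < \<eta> * s" using eta s by simp
      ultimately show False by linarith
    qed
    have Qprod: "cmod (poly Q z) = (\<Prod>b\<in>#S. cmod (z - b))"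
      using cmod_poly_proots[of Q z] Q by (simp add: S_def)
    have "cmod (poly Q z) \<le> 2 ^ size S * gq S a (cmod (z - a))"
      unfolding Qprod by (rule Q_upper_gq)
    also have "gq S a (cmod (z - a)) \<le> g" unfolding g_def by (rule gq_mono) (use zs in auto)
    then have "2 ^ size S * gq S a (cmod (z - a)) \<le> 2 ^ N * g" using szS by simp
    finally have Qz: "cmod (poly Q z) \<le> 2 ^ N * g" .
    have num: "((\<eta> / 3) ^ M * (dn / fact \<nu> * s ^ \<nu>)) powr \<epsilon> \<le> cmod (poly P z) powr \<epsilon>"
      by (rule powr_mono2[OF e _ Pz]) (use eta s in \<open>simp add: dn_def\<close>)
    have den: "cmod (poly Q z) powr \<delta> \<le> (2 ^ N * g) powr \<delta>"
      by (rule powr_mono2[OF d _ Qz]) simp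
    have qpos: "0 < cmod (poly Q z) powr \<delta>" using Qz0 by simp
    show ?thesis unfolding v_def
      by (rule frac_le[OF _ num qpos den]) simp
  qed
  have "ennreal (v * (pi * s ^ 2 / 2)) \<le> set_nn_integral lborel (ball 0 \<Lambda>) (\<lambda>z. ennreal (cmod (poly P z) powr \<epsilon> / cmod (poly Q z) powr \<delta>))"
    by (rule lower_integral[OF W s(1) eta(1) cw sub v0 bnd])
  moreover have "c1c \<epsilon> \<delta> M N * dn powr \<epsilon> * exp (lwf S a \<delta> (real \<nu> * \<epsilon> + 2) s) \<le> v * (pi * s ^ 2 / 2)"
  proof -
    have e1: "exp (lwf S a \<delta> (real \<nu> * \<epsilon> + 2) s) = s powr (real \<nu> * \<epsilon>) * s ^ 2 / g powr \<delta>"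
      unfolding lwf_def g_def by (rule exp_lw[OF s(1), symmetric])
    have e2: "(s ^ \<nu>) powr \<epsilon> = s powr (real \<nu> * \<epsilon>)"
      using s by (simp add: powr_realpow[symmetric] powr_powr)
    define A where "A = (\<eta> / 3) ^ M / fact \<nu>"
    have A0: "0 \<le> A" using eta by (simp add: A_def)
    have "v = (A * dn * s ^ \<nu>) powr \<epsilon> / ((2 ^ N) powr \<delta> * g powr \<delta>)"
      unfolding v_def A_def using gpos by (simp add: powr_mult mult.assoc)
    also have "(A * dn * s ^ \<nu>) powr \<epsilon> = A powr \<epsilon> * dn powr \<epsilon> * s powr (real \<nu> * \<epsilon>)"
      using A0 s by (simp add: powr_mult dn_def e2[symmetric])
    finally have v: "v * (pi * s ^ 2 / 2) = (A powr \<epsilon> / (2 ^ N) powr \<delta> * pi / 2) * dn powr \<epsilon> * exp (lwf S a \<delta> (real \<nu> * \<epsilon> + 2) s)"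
      unfolding e1 by (simp add: field_simps)
    have "(\<eta> / 3) ^ M / fact M \<le> A"
      unfolding A_def using eta by (intro divide_left_mono fact_mono nu) auto
    then have "((\<eta> / 3) ^ M / fact M) powr \<epsilon> \<le> A powr \<epsilon>"
      by (intro powr_mono2 e) (use eta in auto)
    then have "c1c \<epsilon> \<delta> M N \<le> A powr \<epsilon> / (2 ^ N) powr \<delta> * pi / 2"
      unfolding c1c_def \<eta>_def by (intro divide_right_mono mult_right_mono) auto
    then show ?thesis unfolding v
      by (intro mult_right_mono) auto
  qed
  ultimately show ?thesis unfolding dn_def S_def by (meson ennreal_leI order.trans)
qed

theorem theorem1:
  fixes \<epsilon> \<delta> :: real and M N :: nat
  assumes "\<epsilon> \<ge> 0" and "\<delta> \<ge> 0" and "M > 0" and "N > 0"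
    and "\<forall>k \<le> N. \<forall>\<nu> \<le> M. real \<nu> * \<epsilon> + 2 - real (N - k) * \<delta> \<noteq> 0"
  shows "\<exists>c C :: real. c > 0 \<and> C > 0 \<and>
    (\<forall>(P :: complex poly) (Q :: complex poly) (\<Lambda> :: real).
       P \<noteq> 0 \<and> degree P = M \<and> lead_coeff Q = 1 \<and> degree Q = N \<and> \<Lambda> > 0 \<and>
       set_mset (proots Q) \<subseteq> ball 0 (\<Lambda> / 2) \<longrightarrow>
       (let I = set_nn_integral lborel (ball 0 \<Lambda>)
                  (\<lambda>z. ennreal (cmod (poly P z) powr \<epsilon> / cmod (poly Q z) powr \<delta>));
            R = (\<Sum>\<alpha>\<in>{\<alpha>. poly Q \<alpha> = 0}.
                   \<Sum>\<nu>\<in>{\<nu>. poly ((pderiv ^^ \<nu>) P) \<alpha> \<noteq> 0}.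
                     ennreal (cmod (poly ((pderiv ^^ \<nu>) P) \<alpha>) powr \<epsilon>)
                     / ennreal (Phi \<epsilon> \<delta> \<Lambda> (proots Q) \<nu> (k_index \<epsilon> \<delta> N \<nu>) \<alpha>))
        in ennreal c * R \<le> I \<and> I \<le> ennreal C * R))"
proof -
  note hyp = assms(5)
  define pairs where "pairs = {..M} \<times> {..N}"
  define VV where "VV = (\<lambda>(\<nu>, j). \<bar>real \<nu> * \<epsilon> + 2 - real j * \<delta>\<bar>) ` pairs"
  define \<eta> where "\<eta> = Min VV"
  have finV: "finite VV" "VV \<noteq> {}" by (auto simp: VV_def pairs_def)
  have nz: "real \<nu> * \<epsilon> + 2 - real j * \<delta> \<noteq> 0" if "\<nu> \<le> M" "j \<le> N" for \<nu> j
  proof -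
    have "N - j \<le> N" by simp
    then have "real \<nu> * \<epsilon> + 2 - real (N - (N - j)) * \<delta> \<noteq> 0" using hyp that by blast
    moreover have "N - (N - j) = j" using that by simp
    ultimately show ?thesis by simp
  qed
  have eta0: "0 < \<eta>"
    unfolding \<eta>_def using finV
  proof (subst Min_gr_iff)
    show "\<forall>a\<in>VV. 0 < a" using nz by (auto simp: VV_def pairs_def)
  qed auto
  have H: "\<eta> \<le> \<bar>real \<nu> * \<epsilon> + 2 - real j * \<delta>\<bar>" if "\<nu> \<le> M" "j \<le> N" for \<nu> j
    unfolding \<eta>_def using finV that by (intro Min_le) (auto simp: VV_def pairs_def)
  define Cu where "Cu = 2 powr (real M * \<epsilon> + 2 + real N * \<delta>) * Ksum \<eta> * ((real M + 1) powr \<epsilon> * (4 ^ N) powr \<delta> * pi)"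
  define c0 where "c0 = 4 powr (- (real M * \<epsilon> + 2)) * c1c \<epsilon> \<delta> M N"
  define c where "c = c0 / (real N * (real M + 1))"
  have Cu0: "0 < Cu" using Ksum_pos[OF eta0] by (simp add: Cu_def)
  have c00: "0 < c0" using c1c_pos[OF assms(4)] by (simp add: c0_def)
  have c0pos: "0 < c" using c00 assms(4) by (simp add: c_def)
  show ?thesis
  proof (rule exI[of _ c], rule exI[of _ Cu], rule conjI[OF c0pos], rule conjI[OF Cu0], intro allI impI)
    fix P Q :: "complex poly" and \<Lambda> :: real
    assume A: "P \<noteq> 0 \<and> degree P = M \<and> lead_coeff Q = 1 \<and> degree Q = N \<and> \<Lambda> > 0 \<and>
       set_mset (proots Q) \<subseteq> ball 0 (\<Lambda> / 2)"
    then have P0: "P \<noteq> 0" and PM: "degree P = M" and Q1: "lead_coeff Q = 1" and QN: "degree Q = N"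
      and L0: "0 < \<Lambda>" and SB: "set_mset (proots Q) \<subseteq> ball 0 (\<Lambda> / 2)" by auto
    define S where "S = proots Q"
    have Q0: "Q \<noteq> 0" using Q1 by auto
    have szS: "size S = N" by (simp add: S_def size_proots_complex QN)
    have szQ: "size (proots Q) = N" using szS by (simp add: S_def)
    have RT: "{\<alpha>. poly Q \<alpha> = 0} = set_mset S" using Q0 by (auto simp: S_def)
    have cardS: "card (set_mset S) \<le> N" using card_poly_roots_bound[OF Q0] QN RT by simp
    define I where "I = set_nn_integral lborel (ball 0 \<Lambda>)
                  (\<lambda>z. ennreal (cmod (poly P z) powr \<epsilon> / cmod (poly Q z) powr \<delta>))"
    define PH where "PH = (\<lambda>\<alpha> \<nu>. Phi \<epsilon> \<delta> \<Lambda> (proots Q) \<nu> (k_index \<epsilon> \<delta> N \<nu>) \<alpha>)"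
    define dv where "dv = (\<lambda>\<alpha> \<nu>. cmod (poly ((pderiv ^^ \<nu>) P) \<alpha>))"
    define T where "T = (\<lambda>\<alpha> \<nu>. if poly ((pderiv ^^ \<nu>) P) \<alpha> \<noteq> 0
                          then ennreal (dv \<alpha> \<nu> powr \<epsilon>) / ennreal (PH \<alpha> \<nu>) else 0)"
    define R where "R = (\<Sum>\<alpha>\<in>{\<alpha>. poly Q \<alpha> = 0}.
                   \<Sum>\<nu>\<in>{\<nu>. poly ((pderiv ^^ \<nu>) P) \<alpha> \<noteq> 0}.
                     ennreal (cmod (poly ((pderiv ^^ \<nu>) P) \<alpha>) powr \<epsilon>)
                     / ennreal (Phi \<epsilon> \<delta> \<Lambda> (proots Q) \<nu> (k_index \<epsilon> \<delta> N \<nu>) \<alpha>))"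
    have Rrw: "R = (\<Sum>\<alpha>\<in>set_mset S. \<Sum>\<nu>\<le>M. T \<alpha> \<nu>)"
      unfolding R_def RT
    proof (rule sum.cong[OF refl])
      fix \<alpha>
      have "{\<nu>. poly ((pderiv ^^ \<nu>) P) \<alpha> \<noteq> 0} = {\<nu>\<in>{..M}. poly ((pderiv ^^ \<nu>) P) \<alpha> \<noteq> 0}"
      proof -
        have "\<nu> \<le> M" if "poly ((pderiv ^^ \<nu>) P) \<alpha> \<noteq> 0" for \<nu>
        proof (rule ccontr)
          assume "\<not> \<nu> \<le> M"
          then have "(pderiv ^^ \<nu>) P = 0" using PM by (intro pderiv_vanish) auto
          then show False using that by simp
        qed
        then show ?thesis by auto
      qed
      note eqs = this
      show "(\<Sum>\<nu>\<in>{\<nu>. poly ((pderiv ^^ \<nu>) P) \<alpha> \<noteq> 0}. ennreal (cmod (poly ((pderiv ^^ \<nu>) P) \<alpha>) powr \<epsilon>)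
                     / ennreal (Phi \<epsilon> \<delta> \<Lambda> (proots Q) \<nu> (k_index \<epsilon> \<delta> N \<nu>) \<alpha>)) = (\<Sum>\<nu>\<le>M. T \<alpha> \<nu>)"
        unfolding T_def dv_def PH_def eqs by (rule sum.inter_filter) simp
    qed
    have ctx: "rootctx S \<alpha> \<Lambda> \<epsilon> \<delta> \<eta> \<nu> M" if "\<alpha> \<in> set_mset S" "\<nu> \<le> M" for \<alpha> \<nu>
      using that szS assms(1,2,4) L0 SB eta0 H by unfold_locales (auto simp: S_def)
    have upper: "I \<le> ennreal Cu * R"
    proof -
      have "I \<le> (\<Sum>a\<in>set_mset S. \<Sum>\<nu>\<le>M. \<Sum>j. ennreal (Kt P S a \<epsilon> \<delta> M \<nu> (2 * \<Lambda> / 2 ^ j) * (pi * (2 * \<Lambda> / 2 ^ j) ^ 2)))"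
        unfolding I_def S_def by (rule integral_upper[OF P0 PM Q1 _ L0 SB assms(1,2)]) (use QN assms(4) in simp)
      also have "\<dots> \<le> (\<Sum>a\<in>set_mset S. \<Sum>\<nu>\<le>M. ennreal Cu * T a \<nu>)"
      proof (intro sum_mono)
        fix a \<nu> assume a: "a \<in> set_mset S" and nu: "\<nu> \<in> {..M}"
        interpret rc: rootctx S a \<Lambda> \<epsilon> \<delta> \<eta> \<nu> M using ctx a nu by auto
        define dd where "dd = (real M + 1) powr \<epsilon> * (4 ^ N) powr \<delta> * pi * (dv a \<nu> / fact \<nu>) powr \<epsilon>"
        have dd0: "0 \<le> dd" by (simp add: dd_def)
        have eqK: "Kt P S a \<epsilon> \<delta> M \<nu> (2 * \<Lambda> / 2 ^ j) * (pi * (2 * \<Lambda> / 2 ^ j) ^ 2)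
                 = dd * exp (lwf S a \<delta> (real \<nu> * \<epsilon> + 2) (2 * \<Lambda> / 2 ^ j))" for j
        proof -
          have sj: "0 < 2 * \<Lambda> / 2 ^ j" using L0 by simp
          have "exp (lwf S a \<delta> (real \<nu> * \<epsilon> + 2) (2 * \<Lambda> / 2 ^ j))
              = (2 * \<Lambda> / 2 ^ j) powr (real \<nu> * \<epsilon>) * (2 * \<Lambda> / 2 ^ j) ^ 2 / gq S a (2 * \<Lambda> / 2 ^ j) powr \<delta>"
            unfolding lwf_def by (rule exp_lw[OF sj, symmetric])
          then show ?thesis by (simp add: Kt_def dd_def dv_def szS field_simps)
        qed
        have "(\<Sum>j. ennreal (Kt P S a \<epsilon> \<delta> M \<nu> (2 * \<Lambda> / 2 ^ j) * (pi * (2 * \<Lambda> / 2 ^ j) ^ 2)))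
            = (\<Sum>j. ennreal (dd * exp (lwf S a \<delta> (real \<nu> * \<epsilon> + 2) (2 * \<Lambda> / 2 ^ j))))"
          by (simp only: eqK)
        also have "\<dots> \<le> ennreal (2 powr (real M * \<epsilon> + 2 + real (size S) * \<delta>) * Ksum \<eta> * dd) / ennreal rc.PP"
          by (rule rc.UPB[OF dd0])
        also have "\<dots> \<le> ennreal Cu * T a \<nu>"
        proof (cases "poly ((pderiv ^^ \<nu>) P) a \<noteq> 0")
          case True
          have "dd \<le> (real M + 1) powr \<epsilon> * (4 ^ N) powr \<delta> * pi * dv a \<nu> powr \<epsilon>"
          proof -
            have f1: "1 \<le> (fact \<nu> :: real)" by (rule fact_ge_1)
            have x0: "0 \<le> dv a \<nu>" by (simp add: dv_def)
            have "dv a \<nu> / fact \<nu> \<le> dv a \<nu> / 1" by (rule divide_left_mono[OF f1 x0]) simp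
            then have "dv a \<nu> / fact \<nu> \<le> dv a \<nu>" by simp
            then have "(dv a \<nu> / fact \<nu>) powr \<epsilon> \<le> dv a \<nu> powr \<epsilon>"
              by (intro powr_mono2 assms(1)) (auto simp: dv_def)
            then show ?thesis unfolding dd_def by (intro mult_left_mono) auto
          qed
          then have "2 powr (real M * \<epsilon> + 2 + real (size S) * \<delta>) * Ksum \<eta> * dd \<le> Cu * dv a \<nu> powr \<epsilon>"
            unfolding Cu_def szS using Ksum_pos[OF eta0]
            by (simp add: mult.assoc mult_left_mono)
          then have "ennreal (2 powr (real M * \<epsilon> + 2 + real (size S) * \<delta>) * Ksum \<eta> * dd) / ennreal rc.PP
                  \<le> ennreal (Cu * dv a \<nu> powr \<epsilon>) / ennreal rc.PP"
            unfolding divide_ennreal_def by (intro mult_right_mono ennreal_leI) auto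
          also have "\<dots> = ennreal Cu * (ennreal (dv a \<nu> powr \<epsilon>) / ennreal rc.PP)"
            using Cu0 by (simp add: ennreal_mult ennreal_times_divide)
          finally have X: "ennreal (2 powr (real M * \<epsilon> + 2 + real (size S) * \<delta>) * Ksum \<eta> * dd) / ennreal rc.PP
                  \<le> ennreal Cu * (ennreal (dv a \<nu> powr \<epsilon>) / ennreal rc.PP)" .
          have ppeq: "rc.PP = PH a \<nu>" by (simp add: PH_def S_def szQ)
          show ?thesis using X True unfolding ppeq by (simp add: T_def)
        next
          case False
          then have "dd = 0" by (simp add: dd_def dv_def)
          then show ?thesis by simp
        qed
        finally show "(\<Sum>j. ennreal (Kt P S a \<epsilon> \<delta> M \<nu> (2 * \<Lambda> / 2 ^ j) * (pi * (2 * \<Lambda> / 2 ^ j) ^ 2)))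
              \<le> ennreal Cu * T a \<nu>" .
      qed
      also have "\<dots> = ennreal Cu * R" by (simp add: Rrw sum_distrib_left)
      finally show ?thesis .
    qed
    have lowT: "ennreal c0 * T a \<nu> \<le> I" if a: "a \<in> set_mset S" and nu: "\<nu> \<le> M" for a \<nu>
    proof (cases "poly ((pderiv ^^ \<nu>) P) a \<noteq> 0")
      case False
      then show ?thesis by (simp add: T_def)
    next
      case True
      interpret rc: rootctx S a \<Lambda> \<epsilon> \<delta> \<eta> \<nu> M using ctx a nu by auto
      define d where "d = c1c \<epsilon> \<delta> M N * dv a \<nu> powr \<epsilon>"
      have d0: "0 < d" using True c1c_pos[OF assms(4)] by (simp add: d_def dv_def)
      have "ennreal (4 powr (- (real M * \<epsilon> + 2)) * d) / ennreal rc.PP \<le> I"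
      proof (rule rc.LPB[OF d0])
        fix s :: real assume s: "0 < s" "s \<le> \<Lambda> / 4"
        show "ennreal (d * exp (lwf S a \<delta> (real \<nu> * \<epsilon> + 2) s)) \<le> I"
          unfolding d_def dv_def I_def S_def
          by (rule integral_lower[OF P0 PM Q1 QN assms(4) L0 SB assms(1,2) _ nu s])
             (use a in \<open>simp add: S_def\<close>)
      qed
      moreover have "ennreal c0 * T a \<nu> = ennreal (4 powr (- (real M * \<epsilon> + 2)) * d) / ennreal rc.PP"
      proof -
        have "rc.PP = PH a \<nu>" by (simp add: PH_def S_def szQ)
        then have "ennreal c0 * T a \<nu> = ennreal c0 * (ennreal (dv a \<nu> powr \<epsilon>) / ennreal rc.PP)"
          using True by (simp add: T_def)
        also have "\<dots> = ennreal (c0 * dv a \<nu> powr \<epsilon>) / ennreal rc.PP"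
          using c00 by (simp add: ennreal_mult ennreal_times_divide)
        also have "c0 * dv a \<nu> powr \<epsilon> = 4 powr (- (real M * \<epsilon> + 2)) * d"
          by (simp add: c0_def d_def mult.assoc)
        finally show ?thesis .
      qed
      ultimately show ?thesis by simp
    qed
    have lower: "ennreal c * R \<le> I"
    proof -
      have "ennreal c0 * R = (\<Sum>\<alpha>\<in>set_mset S. \<Sum>\<nu>\<le>M. ennreal c0 * T \<alpha> \<nu>)"
        by (simp add: Rrw sum_distrib_left)
      also have "\<dots> \<le> (\<Sum>\<alpha>\<in>set_mset S. \<Sum>\<nu>\<le>M. I)"
        by (intro sum_mono lowT) auto
      also have "\<dots> = of_nat (card (set_mset S)) * (of_nat (M + 1) * I)" by simp
      also have "\<dots> \<le> of_nat N * (of_nat (M + 1) * I)"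
        by (intro mult_right_mono) (use cardS in auto)
      also have "\<dots> = ennreal (real N * (real M + 1)) * I"
        by (simp add: ennreal_of_nat_eq_real_of_nat ennreal_mult mult.assoc add.commute)
      finally have X: "ennreal c0 * R \<le> ennreal (real N * (real M + 1)) * I" .
      have NM: "0 < real N * (real M + 1)" using assms(4) by simp
      have "c = (1 / (real N * (real M + 1))) * c0" by (simp add: c_def)
      then have "ennreal c = ennreal (1 / (real N * (real M + 1))) * ennreal c0"
        using c00 NM by (simp only:) (rule ennreal_mult, auto)
      then have "ennreal c * R = ennreal (1 / (real N * (real M + 1))) * (ennreal c0 * R)"
        by (simp add: mult.assoc)
      also have "\<dots> \<le> ennreal (1 / (real N * (real M + 1))) * (ennreal (real N * (real M + 1)) * I)"
        by (intro mult_left_mono X) auto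
      also have "\<dots> = I"
        using NM assms(4) by (simp add: mult.assoc[symmetric] ennreal_mult[symmetric])
      finally show ?thesis .
    qed
    show "let I = set_nn_integral lborel (ball 0 \<Lambda>)
                  (\<lambda>z. ennreal (cmod (poly P z) powr \<epsilon> / cmod (poly Q z) powr \<delta>));
            R = (\<Sum>\<alpha>\<in>{\<alpha>. poly Q \<alpha> = 0}.
                   \<Sum>\<nu>\<in>{\<nu>. poly ((pderiv ^^ \<nu>) P) \<alpha> \<noteq> 0}.
                     ennreal (cmod (poly ((pderiv ^^ \<nu>) P) \<alpha>) powr \<epsilon>)
                     / ennreal (Phi \<epsilon> \<delta> \<Lambda> (proots Q) \<nu> (k_index \<epsilon> \<delta> N \<nu>) \<alpha>))
        in ennreal c * R \<le> I \<and> I \<le> ennreal Cu * R"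
      unfolding Let_def I_def[symmetric] R_def[symmetric] using lower upper by simp
  qed
qed

end
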